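(* Let $r\ge 1$ and $k\ge1$ be integers. Start with a set of $r+1$ points in general position on the $r$-dimensional unit sphere and apply $k-1$ truncations. Then the 1-skeleton of the convex hull of the resulting set of points is isomorphic to the graph $G_{r,k}$.
   Context: Truncation of a finite set of points on the unit sphere: take the 1-skeleton (vertices and edges) of the convex hull of the points; choose $\delta>0$ small enough that the concentric sphere of radius $1-\delta$ meets each edge of this 1-skeleton in two points; the new point set consists of all these intersection points, rescaled by $1/(1-\delta)$ so they lie on the unit sphere again. A Hanoi state is a sequence $\vec x=(x_1,\dots,x_k)$ of nonnegative integers with $x_i\ne x_{i-1}$ for $i>1$; $\mathcal H_{r,k}$ is the set of Hanoi states in $\{0,\dots,r\}^k$. Moves on $\mathcal H_{r,k}$: an adjustment changes $x_k$ to any other value in $\{0,\dots,r\}$ different from $x_{k-1}$ (if $k=1$, any other value); for $k\ge2$, an involution finds the longest final segment of $\vec x$ on which the entries alternate between $x_k$ and $x_{k-1}$ and swaps these two values throughout that segment. $G_{r,k}$ is the graph with vertex set $\mathcal H_{r,k}$ in which two states are adjacent iff one is obtained from the other by a single move. *)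

theory Defs
  imports "HOL-Analysis.Analysis"
begin

definition skel_vertex :: "('a::euclidean_space) set \<Rightarrow> 'a \<Rightarrow> bool" where
  "skel_vertex P x \<longleftrightarrow> x extreme_point_of (convex hull P)"

definition skel_edge :: "('a::euclidean_space) set \<Rightarrow> 'a \<Rightarrow> 'a \<Rightarrow> bool" where
  "skel_edge P u v \<longleftrightarrow> u \<noteq> v \<and> closed_segment u v face_of (convex hull P)"

definition trunc :: "('a::euclidean_space) set \<Rightarrow> real \<Rightarrow> 'a set \<Rightarrow> bool" where
  "trunc P d Q \<longleftrightarrow> 0 < d \<and> d < 1 \<and>
     (\<forall>u v. skel_edge P u v \<longrightarrow> card (sphere 0 (1 - d) \<inter> closed_segment u v) = 2) \<and>
     Q = (\<lambda>x. (1 / (1 - d)) *\<^sub>R x) `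
           (\<Union>{sphere 0 (1 - d) \<inter> closed_segment u v | u v. skel_edge P u v})"

text \<open>A Hanoi state (x_1,...,x_k) is the list [x_1,...,x_k].\<close>

definition hanoi_states :: "nat \<Rightarrow> nat \<Rightarrow> nat list set" where
  "hanoi_states r k = {xs. length xs = k \<and> (\<forall>i<k. xs ! i \<le> r) \<and>
                          (\<forall>i. 0 < i \<and> i < k \<longrightarrow> xs ! i \<noteq> xs ! (i - 1))}"

definition adjustment :: "nat \<Rightarrow> nat list \<Rightarrow> nat list \<Rightarrow> bool" where
  "adjustment r xs ys \<longleftrightarrow> (\<exists>c. c \<le> r \<and> c \<noteq> last xs \<and>
       (length xs \<ge> 2 \<longrightarrow> c \<noteq> xs ! (length xs - 2)) \<and>
       ys = butlast xs @ [c])"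

definition swap2 :: "nat \<Rightarrow> nat \<Rightarrow> nat \<Rightarrow> nat" where
  "swap2 a b x = (if x = a then b else if x = b then a else x)"

text \<open>Involution: the longest final segment alternating between x_k and x_(k-1)
  (equivalently, for Hanoi states, consisting only of these two values) has these
  two values swapped.\<close>

definition involution :: "nat list \<Rightarrow> nat list" where
  "involution xs = (let a = last xs; b = xs ! (length xs - 2);
                        P = (\<lambda>x. x = a \<or> x = b); rs = rev xs
                    in rev (map (swap2 a b) (takeWhile P rs) @ dropWhile P rs))"

definition hanoi_move :: "nat \<Rightarrow> nat list \<Rightarrow> nat list \<Rightarrow> bool" where
  "hanoi_move r xs ys \<longleftrightarrow> adjustment r xs ys \<or>
      (length xs \<ge> 2 \<and> ys = involution xs)"

definition hanoi_adj :: "nat \<Rightarrow> nat list \<Rightarrow> nat list \<Rightarrow> bool" where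
  "hanoi_adj r xs ys \<longleftrightarrow> hanoi_move r xs ys \<or> hanoi_move r ys xs"

definition graph_iso :: "'a set \<Rightarrow> ('a \<Rightarrow> 'a \<Rightarrow> bool) \<Rightarrow> 'b set \<Rightarrow> ('b \<Rightarrow> 'b \<Rightarrow> bool) \<Rightarrow> bool" where
  "graph_iso V E W F \<longleftrightarrow> (\<exists>f. bij_betw f V W \<and>
       (\<forall>u\<in>V. \<forall>v\<in>V. E u v \<longleftrightarrow> F (f u) (f v)))"

end

theory Submission
  imports Defs
begin

lemma hs_alt: "hanoi_states r k = {xs. length xs = k \<and> set xs \<subseteq> {..r} \<and> distinct_adj xs}"
proof -
  have 1: "(\<forall>i. 0 < i \<and> i < length xs \<longrightarrow> xs ! i \<noteq> xs ! (i - 1)) \<longleftrightarrow> distinct_adj xs" for xs :: "nat list"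
    unfolding distinct_adj_conv_nth
  proof (intro iffI allI impI)
    fix i assume A: "\<forall>i. 0 < i \<and> i < length xs \<longrightarrow> xs ! i \<noteq> xs ! (i - 1)" and "Suc i < length xs"
    then show "xs ! i \<noteq> xs ! Suc i" using A[rule_format, of "Suc i"] by auto
  next
    fix i assume A: "\<forall>i. Suc i < length xs \<longrightarrow> xs ! i \<noteq> xs ! Suc i" and "0 < i \<and> i < length xs"
    then show "xs ! i \<noteq> xs ! (i - 1)" using A[rule_format, of "i - 1"] by auto
  qed
  have 2: "(\<forall>i<length xs. xs ! i \<le> r) \<longleftrightarrow> set xs \<subseteq> {..r}" for xs :: "nat list"
    by (simp add: subset_eq all_set_conv_all_nth)
  show ?thesis unfolding hanoi_states_def
  proof (intro Collect_cong)
    fix xs :: "nat list"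
    show "(length xs = k \<and> (\<forall>i<k. xs ! i \<le> r) \<and> (\<forall>i. 0 < i \<and> i < k \<longrightarrow> xs ! i \<noteq> xs ! (i - 1))) \<longleftrightarrow>
      (length xs = k \<and> set xs \<subseteq> {..r} \<and> distinct_adj xs)"
      using 1[of xs] 2[of xs] by auto
  qed
qed

lemma swap2_swap2[simp]: "swap2 a b (swap2 a b x) = x"
  by (simp add: swap2_def)

lemma swap2_comm: "swap2 b a = swap2 a b"
  by (auto simp: swap2_def fun_eq_iff)

lemma inv_snoc2:
  "involution (ys @ [b, a]) = rev (map (swap2 a b) (takeWhile (\<lambda>x. x = a \<or> x = b) (rev ys))
      @ dropWhile (\<lambda>x. x = a \<or> x = b) (rev ys)) @ [a, b]"
  by (simp add: involution_def Let_def nth_append swap2_def)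

lemma snoc2_exists:
  assumes "length X \<ge> 2"
  shows "\<exists>ys b a. X = ys @ [b, a]"
proof -
  have ne1: "rev X \<noteq> []" using assms by auto
  have "length (tl (rev X)) = length X - 1" by simp
  then have ne2: "tl (rev X) \<noteq> []"
  proof (intro notI)
    assume "tl (rev X) = []"
    then have "length X - 1 = 0" using \<open>length (tl (rev X)) = length X - 1\<close> by simp
    with assms show False by simp
  qed
  note ne = ne1 ne2
  define a where "a = hd (rev X)"
  define b where "b = hd (tl (rev X))"
  define zs where "zs = tl (tl (rev X))"
  have "rev X = a # b # zs" using ne unfolding a_def b_def zs_def by simp
  then have "X = rev zs @ [b, a]" by (metis rev.simps(2) rev_rev_ident append.assoc append_Cons append_Nil rev.simps(1))
  then show ?thesis by blast
qed

lemma P_comm: "(\<lambda>x. x = b \<or> x = a) = (\<lambda>x::nat. x = a \<or> x = b)"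
  by auto

lemma inv_facts:
  assumes X: "X = ys @ [b, a]" and da: "distinct_adj X" and sr: "set X \<subseteq> {..r}"
  shows "length (involution X) = length X"
    and "distinct_adj (involution X)"
    and "set (involution X) \<subseteq> {..r}"
    and "involution (involution X) = X"
    and "\<exists>zs. involution X = zs @ [a, b]"
proof -
  define P where "P = (\<lambda>x::nat. x = a \<or> x = b)"
  define sw where "sw = swap2 a b"
  define tw where "tw = takeWhile P (rev ys)"
  define dw where "dw = dropWhile P (rev ys)"
  define L where "L = map sw tw @ dw"
  have I: "involution X = rev L @ [a, b]"
    unfolding X inv_snoc2 L_def sw_def tw_def dw_def P_def ..
  have ab: "a \<noteq> b" using da X by (auto simp: distinct_adj_append_iff)
  have rys: "rev ys = tw @ dw" by (simp add: tw_def dw_def)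
  have Ptw: "\<forall>x\<in>set tw. P x" using set_takeWhileD tw_def by metis
  have Pmap: "\<forall>x\<in>set (map sw tw). P x" using Ptw by (auto simp: sw_def swap2_def P_def)
  have hdw: "dw \<noteq> [] \<Longrightarrow> \<not> P (hd dw)" using hd_dropWhile dw_def by metis
  have "length (rev ys) = length (tw @ dw)" using rys by simp
  then have "length L = length ys" by (simp add: L_def)
  then show "length (involution X) = length X" using I X by simp
  have "set L \<subseteq> {..r}"
  proof -
    have "set tw \<subseteq> set ys" "set dw \<subseteq> set ys" using rys by (metis set_append set_rev Un_upper1 Un_upper2)+
    moreover have "a \<le> r" "b \<le> r" using sr X by auto
    moreover have "set ys \<subseteq> {..r}" using sr X by auto
    ultimately show ?thesis unfolding L_def sw_def swap2_def by auto
  qed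
  then show "set (involution X) \<subseteq> {..r}" using I sr X by auto
  have dys: "distinct_adj (rev ys)" using da X by (auto simp: distinct_adj_append_iff)
  hence dtw: "distinct_adj tw" and ddw: "distinct_adj dw" using rys by (auto simp: distinct_adj_append_iff)
  have "distinct_adj (map sw tw)"
    by (rule distinct_adj_mapI[OF dtw]) (metis inj_onI swap2_swap2 sw_def)
  moreover have "tw \<noteq> [] \<Longrightarrow> dw \<noteq> [] \<Longrightarrow> last (map sw tw) \<noteq> hd dw"
    using Pmap hdw by (metis last_in_set Nil_is_map_conv)
  ultimately have dL: "distinct_adj L" using ddw unfolding L_def
    by (auto simp: distinct_adj_append_iff)
  have hdL: "L \<noteq> [] \<Longrightarrow> hd L \<noteq> a"
  proof -
    assume "L \<noteq> []"
    show "hd L \<noteq> a"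
    proof (cases tw)
      case Nil
      then have "dw \<noteq> []" "hd L = hd dw" using \<open>L \<noteq> []\<close> by (auto simp: L_def)
      then show ?thesis using hdw P_def by auto
    next
      case (Cons t ts)
      have "ys \<noteq> []" using rys Cons by auto
      then have "last ys \<noteq> b" using da X by (auto simp: distinct_adj_append_iff)
      moreover have "hd (rev ys) = t" using rys Cons by simp
      moreover have "P t" using Ptw Cons by auto
      ultimately have "t = a" using \<open>ys \<noteq> []\<close> by (simp add: P_def hd_rev)
      then show ?thesis using Cons ab by (auto simp: L_def sw_def swap2_def)
    qed
  qed
  have "distinct_adj (b # a # L)" using dL hdL ab
    by (cases L) auto
  then have "distinct_adj (rev (b # a # L))" by (simp only: distinct_adj_rev)
  moreover have "involution X = rev (b # a # L)" using I by simp
  ultimately show "distinct_adj (involution X)" by simp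
  show "\<exists>zs. involution X = zs @ [a, b]" using I by blast
  have tw2: "takeWhile P L = map sw tw"
  proof -
    have "takeWhile P dw = []" using hdw by (cases dw) auto
    moreover have "takeWhile P (map sw tw @ dw) = map sw tw @ takeWhile P dw"
      by (rule takeWhile_append2) (use Pmap in blast)
    ultimately show ?thesis unfolding L_def by simp
  qed
  have dw2: "dropWhile P L = dw"
  proof -
    have "dropWhile P dw = dw" using hdw by (cases dw) auto
    moreover have "dropWhile P (map sw tw @ dw) = dropWhile P dw"
      by (rule dropWhile_append2) (use Pmap in blast)
    ultimately show ?thesis unfolding L_def by simp
  qed
  have "involution (involution X) = involution (rev L @ [a, b])" using I by simp
  also have "\<dots> = rev (map (swap2 b a) (takeWhile P L) @ dropWhile P L) @ [b, a]"
    unfolding inv_snoc2 P_def P_comm[of b a] by simp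
  also have "\<dots> = rev (tw @ dw) @ [b, a]"
    unfolding tw2 dw2 swap2_comm[of b a] sw_def by (simp add: comp_def)
  also have "\<dots> = X"
  proof -
    have "rev (rev ys) = rev (tw @ dw)" using rys by simp
    then show ?thesis using X by simp
  qed
  finally show "involution (involution X) = X" .
qed


lemma hs_mem: "X \<in> hanoi_states r k \<longleftrightarrow> length X = k \<and> set X \<subseteq> {..r} \<and> distinct_adj X"
  by (simp add: hs_alt)

lemma hs_last_nth:
  assumes "X \<in> hanoi_states r k" "k \<ge> 2"
  shows "X ! (k - 2) \<noteq> last X"
proof -
  have "distinct_adj X" "length X = k" using assms by (auto simp: hs_mem)
  moreover have "Suc (k - 2) < length X" using assms \<open>length X = k\<close> by simp
  ultimately have "X ! (k - 2) \<noteq> X ! Suc (k - 2)" using distinct_adj_nth by blast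
  moreover have "last X = X ! Suc (k - 2)"
  proof -
    have "X \<noteq> []" using \<open>length X = k\<close> assms by auto
    then have "last X = X ! (length X - 1)" by (rule last_conv_nth)
    moreover have "length X - 1 = Suc (k - 2)" using \<open>length X = k\<close> assms by simp
    ultimately show ?thesis by simp
  qed
  ultimately show ?thesis by simp
qed

lemma inv_props:
  assumes "X \<in> hanoi_states r k" "k \<ge> 2"
  shows "involution X \<in> hanoi_states r k"
    and "involution (involution X) = X"
    and "butlast (involution X) \<noteq> butlast X"
    and "last (involution X) = X ! (k - 2)"
    and "involution X ! (k - 2) = last X"
proof -
  have L: "length X = k" and da: "distinct_adj X" and sr: "set X \<subseteq> {..r}" using assms(1) by (auto simp: hs_mem)
  obtain ys b a where X: "X = ys @ [b, a]" using snoc2_exists[of X] L assms(2) by auto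
  note F = inv_facts[OF X da sr]
  show "involution X \<in> hanoi_states r k" using F(1-3) L by (simp add: hs_mem)
  show "involution (involution X) = X" using F(4) .
  obtain zs where Z: "involution X = zs @ [a, b]" using F(5) by blast
  have ab: "a \<noteq> b" using da X by (auto simp: distinct_adj_append_iff)
  have lz: "length zs = length ys" using F(1) Z X by simp
  have k2: "k - 2 = length ys" using L X by simp
  show "butlast (involution X) \<noteq> butlast X" using Z X ab
    by (metis butlast_snoc append_Cons append_Nil append_assoc last_snoc)
  have nb: "X ! (k - 2) = b"
  proof -
    have "X ! length ys = b" using X by (simp add: nth_append)
    then show ?thesis using k2 by simp
  qed
  have na: "involution X ! (k - 2) = a"
  proof -
    have "involution X ! length zs = a" using Z by (simp add: nth_append)
    then show ?thesis using k2 lz by simp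
  qed
  show "last (involution X) = X ! (k - 2)" using Z nb by simp
  show "involution X ! (k - 2) = last X" using na X by simp
qed

lemma inv_snoc_c:
  assumes "X \<in> hanoi_states r k" "k \<ge> 1" "c \<noteq> last X"
  shows "involution (X @ [c]) =
    (if k \<ge> 2 \<and> c = X ! (k - 2) then involution X @ [last X] else butlast X @ [c, last X])"
proof (cases "k = 1")
  case True
  then obtain x where X: "X = [x]" using assms(1) by (auto simp: hs_mem length_Suc_conv)
  have "involution (X @ [c]) = involution ([] @ [x, c])" using X by simp
  also have "\<dots> = [c, x]" unfolding inv_snoc2 by simp
  finally show ?thesis using True X by simp
next
  case False
  then have k2: "k \<ge> 2" using assms(2) by simp
  have L: "length X = k" and da: "distinct_adj X" using assms(1) by (auto simp: hs_mem)
  obtain ys b a where X: "X = ys @ [b, a]" using snoc2_exists[of X] L k2 by auto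
  have ab: "a \<noteq> b" using da X by (auto simp: distinct_adj_append_iff)
  have nb: "X ! (k - 2) = b"
  proof -
    have "X ! length ys = b" using X by (simp add: nth_append)
    moreover have "k - 2 = length ys" using X L by simp
    ultimately show ?thesis by simp
  qed
  have la: "last X = a" using X by simp
  have e: "X @ [c] = (ys @ [b]) @ [a, c]" using X by simp
  have I1: "involution (X @ [c]) = rev (map (swap2 c a) (takeWhile (\<lambda>x. x = c \<or> x = a) (b # rev ys))
      @ dropWhile (\<lambda>x. x = c \<or> x = a) (b # rev ys)) @ [c, a]"
    unfolding e inv_snoc2 by simp
  show ?thesis
  proof (cases "c = b")
    case True
    have "involution (X @ [c]) = rev (map (swap2 a b) (takeWhile (\<lambda>x. x = a \<or> x = b) (rev ys))
      @ dropWhile (\<lambda>x. x = a \<or> x = b) (rev ys)) @ [a] @ [b, a]"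
      unfolding I1 by (simp add: True P_comm[of b a] swap2_comm[of b a] swap2_def)
    also have "\<dots> = involution X @ [last X]" unfolding X inv_snoc2 by simp
    finally show ?thesis using True nb k2 by simp
  next
    case False
    have "involution (X @ [c]) = rev (b # rev ys) @ [c, a]" unfolding I1 using False ab by simp
    also have "\<dots> = butlast X @ [c, last X]" using X by (simp add: butlast_append)
    finally show ?thesis using False nb by simp
  qed
qed

lemma adjustment_char:
  assumes "X \<in> hanoi_states r k" "Y \<in> hanoi_states r k" "k \<ge> 1"
  shows "adjustment r X Y \<longleftrightarrow> X \<noteq> Y \<and> butlast X = butlast Y"
proof
  assume "adjustment r X Y"
  then obtain c where c: "c \<noteq> last X" "Y = butlast X @ [c]" unfolding adjustment_def by blast
  have "X \<noteq> []" using assms by (auto simp: hs_mem)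
  then show "X \<noteq> Y \<and> butlast X = butlast Y" using c by (metis butlast_snoc last_snoc)
next
  assume A: "X \<noteq> Y \<and> butlast X = butlast Y"
  have LX: "length X = k" and LY: "length Y = k" and sY: "set Y \<subseteq> {..r}" using assms by (auto simp: hs_mem)
  have neX: "X \<noteq> []" and neY: "Y \<noteq> []" using LX LY assms(3) by auto
  define c where "c = last Y"
  have Y: "Y = butlast X @ [c]" using A neY c_def by simp
  have "c \<le> r" using sY neY c_def by (metis atMost_iff last_in_set subsetD)
  moreover have "c \<noteq> last X" using A neX neY c_def by (metis append_butlast_last_id)
  moreover have "c \<noteq> X ! (length X - 2)" if "length X \<ge> 2"
  proof -
    have "X ! (k - 2) = butlast X ! (k - 2)" using LX that by (simp add: nth_butlast)
    also have "\<dots> = Y ! (k - 2)" using A LY that LX by (simp add: nth_butlast)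
    finally show ?thesis using hs_last_nth[OF assms(2)] that LX c_def by simp
  qed
  ultimately show "adjustment r X Y" unfolding adjustment_def using Y by blast
qed

lemma adj_char:
  assumes "X \<in> hanoi_states r k" "Y \<in> hanoi_states r k" "k \<ge> 1"
  shows "hanoi_adj r X Y \<longleftrightarrow> (X \<noteq> Y \<and> butlast X = butlast Y) \<or> (k \<ge> 2 \<and> Y = involution X)"
proof -
  have LX: "length X = k" and LY: "length Y = k" using assms by (auto simp: hs_mem)
  have "hanoi_move r X Y \<longleftrightarrow> (X \<noteq> Y \<and> butlast X = butlast Y) \<or> (k \<ge> 2 \<and> Y = involution X)"
    unfolding hanoi_move_def adjustment_char[OF assms] using LX by auto
  moreover have "hanoi_move r Y X \<longleftrightarrow> (Y \<noteq> X \<and> butlast Y = butlast X) \<or> (k \<ge> 2 \<and> X = involution Y)"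
    unfolding hanoi_move_def adjustment_char[OF assms(2,1,3)] using LY by auto
  moreover have "k \<ge> 2 \<Longrightarrow> X = involution Y \<longleftrightarrow> Y = involution X"
    using inv_props(2)[OF assms(1)] inv_props(2)[OF assms(2)] by metis
  ultimately show ?thesis unfolding hanoi_adj_def by auto
qed

lemma nth_k2:
  assumes "butlast Y = butlast X" "length X = k" "length Y = k" "k \<ge> 2"
  shows "Y ! (k - 2) = X ! (k - 2)"
proof -
  have a1: "k - 2 < length (butlast Y)" and a2: "k - 2 < length (butlast X)" using assms by auto
  have "butlast Y ! (k - 2) = Y ! (k - 2)" "butlast X ! (k - 2) = X ! (k - 2)"
    using nth_butlast[OF a1] nth_butlast[OF a2] by auto
  then show ?thesis using assms(1) by metis
qed

definition lab :: "nat list \<Rightarrow> nat list \<Rightarrow> nat" where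
  "lab X Y = (if butlast Y = butlast X then last Y else X ! (length X - 2))"

lemma hs_snoc:
  assumes "k \<ge> 1"
  shows "Z \<in> hanoi_states r (Suc k) \<longleftrightarrow> (\<exists>X c. Z = X @ [c] \<and> X \<in> hanoi_states r k \<and> c \<le> r \<and> c \<noteq> last X)"
proof
  assume Z: "Z \<in> hanoi_states r (Suc k)"
  then have L: "length Z = Suc k" and s: "set Z \<subseteq> {..r}" and d: "distinct_adj Z" by (auto simp: hs_mem)
  then have "Z \<noteq> []" by auto
  define X where "X = butlast Z"
  define c where "c = last Z"
  have e: "Z = X @ [c]" using \<open>Z \<noteq> []\<close> X_def c_def by simp
  have "X \<noteq> []" using L e assms by auto
  have "X \<in> hanoi_states r k" using L s d e by (auto simp: hs_mem distinct_adj_append_iff)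
  moreover have "c \<le> r" using s e by auto
  moreover have "c \<noteq> last X" using d e \<open>X \<noteq> []\<close> by (auto simp: distinct_adj_append_iff)
  ultimately show "\<exists>X c. Z = X @ [c] \<and> X \<in> hanoi_states r k \<and> c \<le> r \<and> c \<noteq> last X" using e by blast
next
  assume "\<exists>X c. Z = X @ [c] \<and> X \<in> hanoi_states r k \<and> c \<le> r \<and> c \<noteq> last X"
  then obtain X c where e: "Z = X @ [c]" and X: "X \<in> hanoi_states r k" and c: "c \<le> r" "c \<noteq> last X" by blast
  then have "X \<noteq> []" using assms by (auto simp: hs_mem)
  then show "Z \<in> hanoi_states r (Suc k)" using X c e by (auto simp: hs_mem distinct_adj_append_iff)
qed

lemma lab_props:
  assumes "X \<in> hanoi_states r k" "Y \<in> hanoi_states r k" "k \<ge> 1" "hanoi_adj r X Y"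
  shows "lab X Y \<le> r" "lab X Y \<noteq> last X"
proof -
  have LX: "length X = k" and sX: "set X \<subseteq> {..r}" and LY: "length Y = k" and sY: "set Y \<subseteq> {..r}"
    using assms by (auto simp: hs_mem)
  note A = assms(4)[unfolded adj_char[OF assms(1-3)]]
  show "lab X Y \<le> r"
  proof (cases "butlast Y = butlast X")
    case True
    have "Y \<noteq> []" using LY assms(3) by auto
    then have "last Y \<le> r" using sY by (metis atMost_iff last_in_set subsetD)
    then show ?thesis using True by (auto simp: lab_def)
  next
    case False
    then have "k \<ge> 2" using A by auto
    have "X ! (length X - 2) \<in> set X" using \<open>k \<ge> 2\<close> LX by (intro nth_mem) simp
    then show ?thesis using False sX by (auto simp: lab_def)
  qed
  show "lab X Y \<noteq> last X"
  proof (cases "butlast Y = butlast X")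
    case True
    have k2: "X \<noteq> Y" if "k \<ge> 2" using inv_props(3)[OF assms(1) that] A True by auto
    then have "X \<noteq> Y" "Y \<noteq> []" "X \<noteq> []" using A LY LX assms(3) by auto
    then show ?thesis using True by (metis append_butlast_last_id lab_def)
  next
    case False
    then have "k \<ge> 2" using A by auto
    then show ?thesis using False hs_last_nth[OF assms(1)] LX by (auto simp: lab_def)
  qed
qed

lemma lab_inj:
  assumes "X \<in> hanoi_states r k" "Y \<in> hanoi_states r k" "Y' \<in> hanoi_states r k" "k \<ge> 1"
    "hanoi_adj r X Y" "hanoi_adj r X Y'" "lab X Y = lab X Y'"
  shows "Y = Y'"
proof -
  have LX: "length X = k" and LY: "length Y = k" and LY': "length Y' = k" using assms by (auto simp: hs_mem)
  note A = assms(5)[unfolded adj_char[OF assms(1,2,4)]]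
  note A' = assms(6)[unfolded adj_char[OF assms(1,3,4)]]
  show ?thesis
  proof (cases "butlast Y = butlast X")
    case T1: True
    show ?thesis
    proof (cases "butlast Y' = butlast X")
      case True
      then have "last Y = last Y'" using T1 assms(7) by (simp add: lab_def)
      moreover have "Y \<noteq> []" "Y' \<noteq> []" using LY LY' assms(4) by auto
      ultimately show ?thesis using T1 True by (metis append_butlast_last_id)
    next
      case False
      then have k2: "k \<ge> 2" and Y': "Y' = involution X" using A' by auto
      have "lab X Y' = X ! (k - 2)" using False LX by (simp add: lab_def)
      moreover have "lab X Y = last Y" using T1 by (simp add: lab_def)
      moreover have "last Y \<noteq> Y ! (k - 2)" using hs_last_nth[OF assms(2) k2] by simp
      moreover have "Y ! (k - 2) = X ! (k - 2)" using T1 LY LX k2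
        by (intro nth_k2) auto
      ultimately show ?thesis using assms(7) by simp
    qed
  next
    case F1: False
    then have k2: "k \<ge> 2" and Y: "Y = involution X" using A by auto
    show ?thesis
    proof (cases "butlast Y' = butlast X")
      case True
      have "lab X Y = X ! (k - 2)" using F1 LX by (simp add: lab_def)
      moreover have "lab X Y' = last Y'" using True by (simp add: lab_def)
      moreover have "last Y' \<noteq> Y' ! (k - 2)" using hs_last_nth[OF assms(3) k2] by simp
      moreover have "Y' ! (k - 2) = X ! (k - 2)" using True LY' LX k2
        by (intro nth_k2) auto
      ultimately show ?thesis using assms(7) by simp
    next
      case False
      then show ?thesis using A' Y by auto
    qed
  qed
qed

lemma lab_surj:
  assumes "X \<in> hanoi_states r k" "k \<ge> 1" "c \<le> r" "c \<noteq> last X"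
  shows "\<exists>Y \<in> hanoi_states r k. hanoi_adj r X Y \<and> lab X Y = c"
proof (cases "k \<ge> 2 \<and> c = X ! (k - 2)")
  case True
  have Y: "involution X \<in> hanoi_states r k" using inv_props(1)[OF assms(1)] True by simp
  have "hanoi_adj r X (involution X)" using adj_char[OF assms(1) Y assms(2)] True by simp
  moreover have "lab X (involution X) = c" using inv_props(3)[OF assms(1)] True assms(1)
    by (auto simp: lab_def hs_mem)
  ultimately show ?thesis using Y by blast
next
  case False
  have LX: "length X = k" and sX: "set X \<subseteq> {..r}" and dX: "distinct_adj X" using assms by (auto simp: hs_mem)
  have neX: "X \<noteq> []" using LX assms(2) by auto
  define Y where "Y = butlast X @ [c]"
  have "Y \<in> hanoi_states r k"
  proof -
    have "length Y = k" using LX neX Y_def assms(2) by simp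
    moreover have "set Y \<subseteq> {..r}" using sX assms(3) Y_def by (auto dest: in_set_butlastD)
    moreover have "distinct_adj Y"
    proof (cases "butlast X = []")
      case True then show ?thesis using Y_def by simp
    next
      case bF: False
      have "distinct_adj (butlast X)" using dX neX by (metis append_butlast_last_id distinct_adj_appendD1)
      moreover have "last (butlast X) \<noteq> c"
      proof -
        have "length (butlast X) \<noteq> 0" using bF by (metis length_0_conv)
        then have "k \<ge> 2" using LX length_butlast[of X] by arith
        then have "last (butlast X) = X ! (k - 2)" using LX bF
          by (simp add: last_conv_nth nth_butlast numeral_2_eq_2)
        then show ?thesis using False \<open>k \<ge> 2\<close> by auto
      qed
      ultimately show ?thesis using Y_def bF by (simp add: distinct_adj_append_iff)
    qed
    ultimately show ?thesis by (simp add: hs_mem)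
  qed
  moreover have "hanoi_adj r X Y" using adj_char[OF assms(1) \<open>Y \<in> _\<close> assms(2)] Y_def assms(4) neX
    by (metis append_butlast_last_id butlast_snoc last_snoc)
  moreover have "lab X Y = c" using Y_def by (simp add: lab_def)
  ultimately show ?thesis by blast
qed

lemma adj_snoc:
  assumes X: "X \<in> hanoi_states r k" and Y: "Y \<in> hanoi_states r k" and k: "k \<ge> 1"
    and c: "c \<le> r" "c \<noteq> last X" and c': "c' \<le> r" "c' \<noteq> last Y"
  shows "hanoi_adj r (X @ [c]) (Y @ [c']) \<longleftrightarrow>
     (X = Y \<and> c \<noteq> c') \<or> (hanoi_adj r X Y \<and> c = lab X Y \<and> c' = lab Y X)"
proof -
  have Z: "X @ [c] \<in> hanoi_states r (Suc k)" using hs_snoc[OF k] X c by blast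
  have W: "Y @ [c'] \<in> hanoi_states r (Suc k)" using hs_snoc[OF k] Y c' by blast
  have LX: "length X = k" and LY: "length Y = k" using X Y by (auto simp: hs_mem)
  have neX: "X \<noteq> []" and neY: "Y \<noteq> []" using LX LY k by auto
  have AC: "hanoi_adj r (X @ [c]) (Y @ [c']) \<longleftrightarrow> (X = Y \<and> c \<noteq> c') \<or> Y @ [c'] = involution (X @ [c])"
    using adj_char[OF Z W] k by auto
  note IC = inv_snoc_c[OF X k c(2)]
  note AXY = adj_char[OF X Y k]
  show ?thesis
  proof
    assume "hanoi_adj r (X @ [c]) (Y @ [c'])"
    then consider "X = Y \<and> c \<noteq> c'" | "Y @ [c'] = involution (X @ [c])" using AC by blast
    then show "(X = Y \<and> c \<noteq> c') \<or> (hanoi_adj r X Y \<and> c = lab X Y \<and> c' = lab Y X)"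
    proof cases
      case 1 then show ?thesis by simp
    next
      case 2
      show ?thesis
      proof (cases "k \<ge> 2 \<and> c = X ! (k - 2)")
        case True
        then have e: "Y @ [c'] = involution X @ [last X]" using 2 IC by simp
        then have Yi: "Y = involution X" and c'e: "c' = last X" by auto
        have "hanoi_adj r X Y" using AXY Yi True by simp
        moreover have "lab X Y = c" using Yi inv_props(3)[OF X] True LX by (simp add: lab_def)
        moreover have "lab Y X = c'"
          using Yi inv_props(3,5)[OF X] True LY c'e by (auto simp: lab_def)
        ultimately show ?thesis by simp
      next
        case False
        then have e: "Y @ [c'] = butlast X @ [c, last X]" using 2 IC[unfolded if_not_P[OF False]] by simp
        then have Ye: "Y = butlast X @ [c]" and c'e: "c' = last X"
          by (metis append.assoc append_Cons append_Nil butlast_snoc last_snoc)+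
        have "X \<noteq> Y" using Ye c(2) by (metis last_snoc)
        moreover have bl: "butlast X = butlast Y" using Ye by simp
        ultimately have "hanoi_adj r X Y" using AXY by simp
        moreover have "lab X Y = c" using Ye by (simp add: lab_def)
        moreover have "lab Y X = c'" using bl c'e by (simp add: lab_def)
        ultimately show ?thesis by simp
      qed
    qed
  next
    assume "(X = Y \<and> c \<noteq> c') \<or> (hanoi_adj r X Y \<and> c = lab X Y \<and> c' = lab Y X)"
    then consider "X = Y \<and> c \<noteq> c'" | "hanoi_adj r X Y" "c = lab X Y" "c' = lab Y X" by blast
    then show "hanoi_adj r (X @ [c]) (Y @ [c'])"
    proof cases
      case 1 then show ?thesis using AC by simp
    next
      case 2
      show ?thesis
      proof (cases "butlast X = butlast Y")
        case True
        then have XY: "X \<noteq> Y" using 2(1) AXY inv_props(3)[OF X] by auto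
        have cY: "c = last Y" using 2(2) True by (simp add: lab_def)
        have c'X: "c' = last X" using 2(3) True by (simp add: lab_def)
        have nc: "\<not> (k \<ge> 2 \<and> c = X ! (k - 2))"
        proof
          assume "k \<ge> 2 \<and> c = X ! (k - 2)"
          moreover have "Y ! (k - 2) = X ! (k - 2)" if "k \<ge> 2" using True LY LX that
            by (intro nth_k2) auto
          ultimately show False using hs_last_nth[OF Y] cY by auto
        qed
        have "involution (X @ [c]) = butlast X @ [c, last X]" using IC[unfolded if_not_P[OF nc]] .
        also have "\<dots> = Y @ [c']" using True cY c'X neY by (metis append.assoc append_Cons append_Nil append_butlast_last_id)
        finally show ?thesis using AC by simp
      next
        case False
        then have k2: "k \<ge> 2" and Yi: "Y = involution X" using 2(1) AXY by auto
        have cX: "c = X ! (k - 2)" using 2(2) False LX by (simp add: lab_def)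
        have "c' = Y ! (k - 2)" using 2(3) False LY by (auto simp: lab_def)
        then have c'X: "c' = last X" using inv_props(5)[OF X k2] Yi by simp
        have "involution (X @ [c]) = involution X @ [last X]" using IC k2 cX by simp
        then show ?thesis using AC Yi c'X by simp
      qed
    qed
  qed
qed


lemma hanoi_adj_sym: "hanoi_adj r X Y \<longleftrightarrow> hanoi_adj r Y X"
  by (auto simp: hanoi_adj_def)

lemma iso_step:
  fixes V :: "'a set" and E :: "'a \<Rightarrow> 'a \<Rightarrow> bool" and q :: "'a \<Rightarrow> 'a \<Rightarrow> 'b"
  assumes k: "k \<ge> 1"
    and f: "bij_betw f V (hanoi_states r k)"
    and fE: "\<forall>u\<in>V. \<forall>v\<in>V. E u v \<longleftrightarrow> hanoi_adj r (f u) (f v)"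
    and EV: "\<forall>u v. E u v \<longrightarrow> u \<in> V \<and> v \<in> V"
    and W: "W = {q u v | u v. E u v}"
    and qinj: "\<forall>u v u' v'. E u v \<longrightarrow> E u' v' \<longrightarrow> q u v = q u' v' \<longrightarrow> u = u' \<and> v = v'"
    and F: "\<forall>u v u' v'. E u v \<longrightarrow> E u' v' \<longrightarrow>
              (F (q u v) (q u' v') \<longleftrightarrow> (u = u' \<and> v \<noteq> v') \<or> (u' = v \<and> v' = u))"
  shows "graph_iso W F (hanoi_states r (Suc k)) (hanoi_adj r)"
proof -
  define D where "D = {(u, v). E u v}"
  define qq where "qq = (\<lambda>(u, v). q u v)"
  define g where "g = (\<lambda>(u, v). f u @ [lab (f u) (f v)])"
  have fH: "f u \<in> hanoi_states r k" if "u \<in> V" for u using f that bij_betwE by blast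
  have finj: "f u = f v \<longleftrightarrow> u = v" if "u \<in> V" "v \<in> V" for u v
    using f that by (metis bij_betw_imp_inj_on inj_on_eq_iff)
  have Esym: "E u v \<Longrightarrow> E v u" for u v
  proof -
    assume "E u v"
    then have "u \<in> V" "v \<in> V" using EV by auto
    moreover have "hanoi_adj r (f v) (f u)" using fE \<open>E u v\<close> \<open>u \<in> V\<close> \<open>v \<in> V\<close> hanoi_adj_sym by blast
    ultimately show "E v u" using fE by blast
  qed
  have adjE: "E u v \<Longrightarrow> hanoi_adj r (f u) (f v)" for u v using EV fE by blast
  have bq: "bij_betw qq D W"
  proof (rule bij_betwI')
    fix x y assume "x \<in> D" "y \<in> D"
    then obtain a b c d where "x = (a, b)" "y = (c, d)" "E a b" "E c d" unfolding D_def by auto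
    then show "(qq x = qq y) = (x = y)" using qinj[rule_format, of a b c d] unfolding qq_def by auto
  next
    fix x assume "x \<in> D" then show "qq x \<in> W" unfolding D_def qq_def W by auto
  next
    fix y assume "y \<in> W" then show "\<exists>x\<in>D. y = qq x" unfolding D_def qq_def W by auto
  qed
  have labinj: "lab (f u) (f v) = lab (f u) (f v') \<longleftrightarrow> v = v'" if "E u v" "E u v'" for u v v'
  proof
    assume eq: "lab (f u) (f v) = lab (f u) (f v')"
    have V: "u \<in> V" "v \<in> V" "v' \<in> V" using EV that by auto
    have "f v = f v'" by (rule lab_inj[OF fH[OF V(1)] fH[OF V(2)] fH[OF V(3)] k adjE[OF that(1)] adjE[OF that(2)] eq])
    then show "v = v'" using finj V by blast
  qed simp
  have bg: "bij_betw g D (hanoi_states r (Suc k))"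
  proof (rule bij_betwI')
    fix x y assume x: "x \<in> D" and y: "y \<in> D"
    obtain u v where xe: "x = (u, v)" and uv: "E u v" using x D_def by auto
    obtain u' v' where ye: "y = (u', v')" and uv': "E u' v'" using y D_def by auto
    show "(g x = g y) = (x = y)"
    proof
      assume "g x = g y"
      then have "f u = f u'" and l: "lab (f u) (f v) = lab (f u') (f v')" using xe ye g_def by auto
      then have "u = u'" using finj EV uv uv' by blast
      then show "x = y" using l labinj uv uv' xe ye by auto
    qed simp
  next
    fix x assume x: "x \<in> D"
    obtain u v where xe: "x = (u, v)" and uv: "E u v" using x D_def by auto
    have "u \<in> V" "v \<in> V" using EV uv by auto
    then show "g x \<in> hanoi_states r (Suc k)"
      using hs_snoc[OF k] lab_props[OF fH fH k adjE[OF uv]] fH xe g_def by auto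
  next
    fix z assume "z \<in> hanoi_states r (Suc k)"
    then obtain X c where z: "z = X @ [c]" and X: "X \<in> hanoi_states r k" and c: "c \<le> r" "c \<noteq> last X"
      using hs_snoc[OF k] by blast
    obtain Y where Y: "Y \<in> hanoi_states r k" "hanoi_adj r X Y" "lab X Y = c"
      using lab_surj[OF X k c] by blast
    define u where "u = inv_into V f X"
    define v where "v = inv_into V f Y"
    have Xim: "X \<in> f ` V" and Yim: "Y \<in> f ` V" using X Y(1) f by (auto simp: bij_betw_def)
    have u: "u \<in> V" "f u = X" unfolding u_def using inv_into_into[OF Xim] f_inv_into_f[OF Xim] by auto
    have v: "v \<in> V" "f v = Y" unfolding v_def using inv_into_into[OF Yim] f_inv_into_f[OF Yim] by auto
    have "E u v" using fE u v Y by auto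
    then show "\<exists>x\<in>D. z = g x" using u v Y z unfolding D_def g_def by auto
  qed
  define h where "h = g \<circ> inv_into D qq"
  have bh: "bij_betw h W (hanoi_states r (Suc k))"
    unfolding h_def by (rule bij_betw_trans[OF bij_betw_inv_into[OF bq] bg])
  have hq: "h (q u v) = f u @ [lab (f u) (f v)]" if "E u v" for u v
  proof -
    have "(u, v) \<in> D" using that D_def by simp
    then have "inv_into D qq (qq (u, v)) = (u, v)" using bq by (simp add: bij_betw_def inv_into_f_f)
    then show ?thesis unfolding h_def qq_def g_def by simp
  qed
  show ?thesis unfolding graph_iso_def
  proof (intro exI conjI ballI)
    show "bij_betw h W (hanoi_states r (Suc k))" by (rule bh)
  next
    fix x y assume "x \<in> W" "y \<in> W"
    then obtain u v u' v' where x: "x = q u v" "E u v" and y: "y = q u' v'" "E u' v'" using W by auto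
    have V: "u \<in> V" "v \<in> V" "u' \<in> V" "v' \<in> V" using EV x y by auto
    have "hanoi_adj r (h x) (h y) \<longleftrightarrow>
       (f u = f u' \<and> lab (f u) (f v) \<noteq> lab (f u') (f v')) \<or>
       (hanoi_adj r (f u) (f u') \<and> lab (f u) (f v) = lab (f u) (f u') \<and> lab (f u') (f v') = lab (f u') (f u))"
      unfolding hq[OF x(2)] hq[OF y(2)] x(1) y(1)
      by (rule adj_snoc[OF fH[OF V(1)] fH[OF V(3)] k lab_props[OF fH fH k adjE[OF x(2)]]
           lab_props[OF fH fH k adjE[OF y(2)]]]) (use V in auto)
    also have "\<dots> \<longleftrightarrow> (u = u' \<and> v \<noteq> v') \<or> (u' = v \<and> v' = u)"
    proof
      assume "(f u = f u' \<and> lab (f u) (f v) \<noteq> lab (f u') (f v')) \<or>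
       (hanoi_adj r (f u) (f u') \<and> lab (f u) (f v) = lab (f u) (f u') \<and> lab (f u') (f v') = lab (f u') (f u))"
      then show "(u = u' \<and> v \<noteq> v') \<or> (u' = v \<and> v' = u)"
      proof
        assume a: "f u = f u' \<and> lab (f u) (f v) \<noteq> lab (f u') (f v')"
        then have "u = u'" using finj V by blast
        then show ?thesis using a by auto
      next
        assume a: "hanoi_adj r (f u) (f u') \<and> lab (f u) (f v) = lab (f u) (f u') \<and> lab (f u') (f v') = lab (f u') (f u)"
        then have "E u u'" using fE V by blast
        then have "v = u'" "v' = u" using a labinj x(2) y(2) Esym by blast+
        then show ?thesis by simp
      qed
    next
      assume "(u = u' \<and> v \<noteq> v') \<or> (u' = v \<and> v' = u)"
      then show "(f u = f u' \<and> lab (f u) (f v) \<noteq> lab (f u') (f v')) \<or>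
       (hanoi_adj r (f u) (f u') \<and> lab (f u) (f v) = lab (f u) (f u') \<and> lab (f u') (f v') = lab (f u') (f u))"
      proof
        assume a: "u = u' \<and> v \<noteq> v'"
        then show ?thesis using labinj x(2) y(2) by auto
      next
        assume a: "u' = v \<and> v' = u"
        then show ?thesis using adjE x(2) by auto
      qed
    qed
    also have "\<dots> \<longleftrightarrow> F x y" using F[rule_format, OF x(2) y(2)] x(1) y(1) by simp
    finally show "F x y \<longleftrightarrow> hanoi_adj r (h x) (h y)" by simp
  qed
qed


lemma sq_identity:
  fixes a b :: "'a::real_inner"
  shows "norm ((1 - t) *\<^sub>R a + t *\<^sub>R b) ^ 2 = (1 - t) * norm a ^ 2 + t * norm b ^ 2 - t * (1 - t) * norm (a - b) ^ 2"
  by (simp add: power2_norm_eq_inner inner_add_left inner_add_right inner_diff_left inner_diff_right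
      inner_commute algebra_simps)

lemma strict_sphere:
  fixes a b x :: "'a::real_inner"
  assumes "norm a \<le> 1" "norm b \<le> 1" "norm x = 1"
  shows "x \<notin> open_segment a b"
proof
  assume "x \<in> open_segment a b"
  then obtain t where ab: "a \<noteq> b" and t: "0 < t" "t < 1" and x: "x = (1 - t) *\<^sub>R a + t *\<^sub>R b"
    unfolding in_segment by blast
  have "norm a ^ 2 \<le> 1" "norm b ^ 2 \<le> 1" using assms by (auto simp: power_le_one)
  moreover have "norm (a - b) ^ 2 > 0" using ab by simp
  moreover have "t * (1 - t) > 0" using t by simp
  ultimately have "(1 - t) * norm a ^ 2 + t * norm b ^ 2 - t * (1 - t) * norm (a - b) ^ 2 < 1"
    using t by (smt (verit) mult_left_le mult_pos_pos)
  moreover have "norm x ^ 2 = (1 - t) * norm a ^ 2 + t * norm b ^ 2 - t * (1 - t) * norm (a - b) ^ 2"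
    unfolding x by (rule sq_identity)
  ultimately have "norm x ^ 2 < 1" by linarith
  then show False using assms by simp
qed

lemma hull_sub_ball:
  fixes P :: "'a::real_normed_vector set"
  assumes "P \<subseteq> sphere 0 1"
  shows "convex hull P \<subseteq> cball 0 1"
proof (rule hull_minimal)
  show "P \<subseteq> cball 0 1" using assms sphere_cball by blast
  show "convex (cball (0::'a) 1)" by (rule convex_cball)
qed

lemma sphere_ext:
  fixes P :: "'a::euclidean_space set"
  assumes "P \<subseteq> sphere 0 1" "x \<in> P"
  shows "x extreme_point_of (convex hull P)"
  unfolding extreme_point_of_def
proof (intro conjI ballI)
  show "x \<in> convex hull P" by (rule hull_inc) (rule assms(2))
  fix a b assume "a \<in> convex hull P" "b \<in> convex hull P"
  then have "a \<in> cball 0 1" "b \<in> cball 0 1" using hull_sub_ball[OF assms(1)] by blast+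
  then have "norm a \<le> 1" "norm b \<le> 1" by simp_all
  moreover have "x \<in> sphere 0 1" using assms by blast
  then have "norm x = 1" by simp
  ultimately show "x \<notin> open_segment a b" by (rule strict_sphere)
qed

lemma edge_ends:
  fixes P :: "'a::euclidean_space set"
  assumes "skel_edge P u v"
  shows "u \<in> P" "v \<in> P" "u extreme_point_of (convex hull P)" "v extreme_point_of (convex hull P)"
proof -
  have F: "closed_segment u v face_of convex hull P" using assms by (simp add: skel_edge_def)
  have "u extreme_point_of closed_segment u v" "v extreme_point_of closed_segment u v"
    by (simp_all add: extreme_point_of_segment)
  then show "u extreme_point_of (convex hull P)" "v extreme_point_of (convex hull P)"
    using extreme_point_of_face[OF F] by blast+
  then show "u \<in> P" "v \<in> P" using extreme_point_of_convex_hull by auto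
qed

lemma ext_in_segment:
  assumes "w extreme_point_of S" "u \<in> S" "v \<in> S" "w \<in> closed_segment u v"
  shows "w = u \<or> w = v"
  using assms unfolding extreme_point_of_def open_segment_def by blast

definition cc :: "'a::real_vector \<Rightarrow> 'a set \<Rightarrow> 'a \<Rightarrow> bool" where
  "cc u S x \<longleftrightarrow> (\<exists>\<mu>. (\<forall>w\<in>S. 0 \<le> \<mu> w) \<and> x - u = (\<Sum>w\<in>S. \<mu> w *\<^sub>R (w - u)))"

definition good :: "'a::euclidean_space set \<Rightarrow> ('a \<Rightarrow> 'a set) \<Rightarrow> bool" where
  "good P N \<longleftrightarrow> finite P \<and> P \<subseteq> sphere 0 1 \<and>
     (\<forall>u\<in>P. N u \<subseteq> P - {u} \<and> card (N u) = DIM('a) \<and> independent ((\<lambda>w. w - u) ` N u) \<and>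
        (\<forall>x\<in>P. cc u (N u) x))"

lemma ind0:
  fixes u :: "'a::euclidean_space"
  assumes "finite S" "independent ((\<lambda>w. w - u) ` S)" "(\<Sum>w\<in>S. c w *\<^sub>R (w - u)) = 0" "w \<in> S"
  shows "c w = 0"
proof -
  let ?T = "(\<lambda>w. w - u) ` S"
  have inj: "inj_on (\<lambda>w. w - u) S" by (auto simp: inj_on_def)
  define d where "d b = c (inv_into S (\<lambda>w. w - u) b)" for b
  have "(\<Sum>b\<in>?T. d b *\<^sub>R b) = (\<Sum>w\<in>S. d (w - u) *\<^sub>R (w - u))"
    by (rule sum.reindex[OF inj, unfolded comp_def])
  also have "\<dots> = (\<Sum>w\<in>S. c w *\<^sub>R (w - u))"
    by (rule sum.cong) (auto simp: d_def inv_into_f_f[OF inj])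
  finally have "(\<Sum>b\<in>?T. d b *\<^sub>R b) = 0" using assms(3) by simp
  then have "\<forall>b\<in>?T. d b = 0" using assms(2) unfolding independent_explicit by blast
  then have "d (w - u) = 0" using assms(4) by blast
  then show ?thesis by (simp add: d_def inv_into_f_f[OF inj assms(4)])
qed

lemma cc_convex:
  assumes "finite S"
  shows "convex {x. cc u S x}"
  unfolding convex_def
proof (intro ballI allI impI)
  fix x y and a b :: real
  assume "x \<in> {x. cc u S x}" "y \<in> {x. cc u S x}" and ab: "0 \<le> a" "0 \<le> b" "a + b = 1"
  then obtain \<mu> \<nu> where m: "\<forall>w\<in>S. 0 \<le> \<mu> w" "x - u = (\<Sum>w\<in>S. \<mu> w *\<^sub>R (w - u))"
    and n: "\<forall>w\<in>S. 0 \<le> \<nu> w" "y - u = (\<Sum>w\<in>S. \<nu> w *\<^sub>R (w - u))"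
    unfolding cc_def by auto
  have "a *\<^sub>R x + b *\<^sub>R y - u = a *\<^sub>R (x - u) + b *\<^sub>R (y - u)"
    using ab by (simp add: algebra_simps flip: scaleR_add_left)
  also have "\<dots> = (\<Sum>w\<in>S. (a * \<mu> w + b * \<nu> w) *\<^sub>R (w - u))"
    unfolding m n by (simp add: scaleR_sum_right sum.distrib scaleR_add_left)
  finally show "a *\<^sub>R x + b *\<^sub>R y \<in> {x. cc u S x}"
    unfolding cc_def using m(1) n(1) ab by (auto intro!: exI[of _ "\<lambda>w. a * \<mu> w + b * \<nu> w"])
qed

lemma cc_hull:
  assumes "finite S" "\<forall>x\<in>P. cc u S x" "x \<in> convex hull P"
  shows "cc u S x"
proof -
  have "convex hull P \<subseteq> {x. cc u S x}" using assms(2) by (intro hull_minimal cc_convex[OF assms(1)]) auto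
  then show ?thesis using assms(3) by auto
qed

lemma sum_single:
  fixes c :: "'x \<Rightarrow> real" and f :: "'x \<Rightarrow> 'b::real_vector"
  assumes "finite S" "v \<in> S" "\<forall>w\<in>S. w \<noteq> v \<longrightarrow> c w = 0"
  shows "(\<Sum>w\<in>S. c w *\<^sub>R f w) = c v *\<^sub>R f v"
proof -
  have "(\<Sum>w\<in>S. c w *\<^sub>R f w) = c v *\<^sub>R f v + (\<Sum>w\<in>S - {v}. c w *\<^sub>R f w)"
    using assms by (simp add: sum.remove)
  also have "(\<Sum>w\<in>S - {v}. c w *\<^sub>R f w) = 0"
  proof (rule sum.neutral)
    show "\<forall>w\<in>S - {v}. c w *\<^sub>R f w = 0" using assms(3) by simp
  qed
  finally show ?thesis by simp
qed


lemma seg_norm: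
  fixes u v :: "'a::real_inner"
  assumes "norm u = R" "norm v = R"
  shows "norm (u + t *\<^sub>R (v - u)) ^ 2 = R ^ 2 - t * (1 - t) * norm (v - u) ^ 2"
proof -
  have "u + t *\<^sub>R (v - u) = (1 - t) *\<^sub>R u + t *\<^sub>R v" by (simp add: algebra_simps)
  then have "norm (u + t *\<^sub>R (v - u)) ^ 2 = (1 - t) * norm u ^ 2 + t * norm v ^ 2 - t * (1 - t) * norm (u - v) ^ 2"
    using sq_identity by metis
  also have "\<dots> = R ^ 2 - t * (1 - t) * norm (v - u) ^ 2" using assms by (simp add: norm_minus_commute algebra_simps)
  finally show ?thesis .
qed

lemma on_seg:
  fixes u v :: "'a::real_inner"
  assumes "norm u = 1" "norm v = 1" "u \<noteq> v" "norm a \<le> 1" "0 \<le> \<alpha>" "a = u + \<alpha> *\<^sub>R (v - u)"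
  shows "a \<in> closed_segment u v"
proof -
  have "norm a ^ 2 = 1 - \<alpha> * (1 - \<alpha>) * norm (v - u) ^ 2" using seg_norm[OF assms(1,2)] assms(6) by simp
  moreover have "norm a ^ 2 \<le> 1" using assms(4) by (simp add: power_le_one)
  ultimately have "\<alpha> * (1 - \<alpha>) * norm (v - u) ^ 2 \<ge> 0" by simp
  moreover have "norm (v - u) ^ 2 > 0" using assms(3) by simp
  ultimately have "\<alpha> * (1 - \<alpha>) \<ge> 0" by (simp add: zero_le_mult_iff)
  then have "\<alpha> \<le> 1" using assms(5) by (cases "\<alpha> = 0") (auto simp: zero_le_mult_iff)
  moreover have "a = (1 - \<alpha>) *\<^sub>R u + \<alpha> *\<^sub>R v" using assms(6) by (simp add: algebra_simps)
  ultimately show ?thesis using assms(5) unfolding in_segment by blast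
qed

lemma good_D:
  fixes P :: "'a::euclidean_space set"
  assumes "good P N" "u \<in> P"
  shows "finite P" "P \<subseteq> sphere 0 1" "N u \<subseteq> P - {u}" "card (N u) = DIM('a)"
    "independent ((\<lambda>w. w - u) ` N u)" "\<forall>x\<in>P. cc u (N u) x" "finite (N u)"
proof -
  show "finite P" "P \<subseteq> sphere 0 1" "N u \<subseteq> P - {u}" "card (N u) = DIM('a)"
    "independent ((\<lambda>w. w - u) ` N u)" "\<forall>x\<in>P. cc u (N u) x"
    using assms unfolding good_def by auto
  then show "finite (N u)" by (meson Diff_subset finite_subset subset_trans)
qed

lemma pos_comb_zero:
  fixes p q t :: real
  assumes "0 \<le> p" "0 \<le> q" "0 < t" "t < 1" "(1 - t) * p + t * q = 0"
  shows "p = 0" "q = 0"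
proof -
  have "(1 - t) * p \<ge> 0" "t * q \<ge> 0" using assms by auto
  then have "(1 - t) * p = 0" "t * q = 0" using assms(5) by linarith+
  then show "p = 0" "q = 0" using assms(3,4) by auto
qed

lemma edge_if:
  fixes P :: "'a::euclidean_space set"
  assumes g: "good P N" and uP: "u \<in> P" and vN: "v \<in> N u"
  shows "skel_edge P u v"
proof -
  note G = good_D[OF g uP]
  have vP: "v \<in> P" and uv: "u \<noteq> v" using G(3) vN by auto
  have nu: "norm u = 1" and nv: "norm v = 1" using G(2) uP vP by auto
  have key: "a \<in> closed_segment u v" if a: "a \<in> convex hull P" and \<mu>: "\<forall>w\<in>N u. 0 \<le> \<mu> w"
     and ae: "a - u = (\<Sum>w\<in>N u. \<mu> w *\<^sub>R (w - u))" and z: "\<forall>w\<in>N u. w \<noteq> v \<longrightarrow> \<mu> w = 0" for a \<mu>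
  proof -
    have "a - u = \<mu> v *\<^sub>R (v - u)" using ae sum_single[OF G(7) vN z] by simp
    moreover have "norm a \<le> 1" using hull_sub_ball[OF G(2)] a by auto
    ultimately show ?thesis using on_seg[OF nu nv uv] \<mu> vN by (metis add.commute diff_add_cancel)
  qed
  have "closed_segment u v face_of convex hull P"
    unfolding face_of_def
  proof (intro conjI ballI impI)
    show "closed_segment u v \<subseteq> convex hull P"
      by (rule closed_segment_subset[OF hull_inc[OF uP] hull_inc[OF vP] convex_convex_hull])
    show "convex (closed_segment u v)" by (rule convex_closed_segment)
    fix a b x assume a: "a \<in> convex hull P" and b: "b \<in> convex hull P" and x: "x \<in> closed_segment u v"
      and xo: "x \<in> open_segment a b"
    obtain \<mu>a where ma: "\<forall>w\<in>N u. 0 \<le> \<mu>a w" "a - u = (\<Sum>w\<in>N u. \<mu>a w *\<^sub>R (w - u))"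
      using cc_hull[OF G(7) G(6) a] unfolding cc_def by blast
    obtain \<mu>b where mb: "\<forall>w\<in>N u. 0 \<le> \<mu>b w" "b - u = (\<Sum>w\<in>N u. \<mu>b w *\<^sub>R (w - u))"
      using cc_hull[OF G(7) G(6) b] unfolding cc_def by blast
    obtain t where t: "0 < t" "t < 1" and xt: "x = (1 - t) *\<^sub>R a + t *\<^sub>R b"
      using xo unfolding in_segment by blast
    obtain s where xs: "x = (1 - s) *\<^sub>R u + s *\<^sub>R v" using x unfolding in_segment by blast
    have e1: "(\<Sum>w\<in>N u. ((1 - t) * \<mu>a w + t * \<mu>b w) *\<^sub>R (w - u)) = x - u"
    proof -
      have "(\<Sum>w\<in>N u. ((1 - t) * \<mu>a w + t * \<mu>b w) *\<^sub>R (w - u))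
          = (1 - t) *\<^sub>R (\<Sum>w\<in>N u. \<mu>a w *\<^sub>R (w - u)) + t *\<^sub>R (\<Sum>w\<in>N u. \<mu>b w *\<^sub>R (w - u))"
        by (simp add: scaleR_sum_right sum.distrib scaleR_add_left)
      also have "\<dots> = (1 - t) *\<^sub>R (a - u) + t *\<^sub>R (b - u)" using ma mb by simp
      also have "\<dots> = x - u" using xt by (simp add: algebra_simps)
      finally show ?thesis .
    qed
    have e2: "(\<Sum>w\<in>N u. (if w = v then s else 0) *\<^sub>R (w - u)) = x - u"
    proof -
      have "(\<Sum>w\<in>N u. (if w = v then s else 0) *\<^sub>R (w - u)) = (if v = v then s else 0) *\<^sub>R (v - u)"
        by (rule sum_single[OF G(7) vN]) auto
      also have "\<dots> = x - u" using xs by (simp add: algebra_simps)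
      finally show ?thesis .
    qed
    have S0: "(\<Sum>w\<in>N u. ((1 - t) * \<mu>a w + t * \<mu>b w - (if w = v then s else 0)) *\<^sub>R (w - u)) = 0"
      using e1 e2 by (simp add: scaleR_diff_left sum_subtractf)
    have c0: "(1 - t) * \<mu>a w + t * \<mu>b w - (if w = v then s else 0) = 0" if "w \<in> N u" for w
      using ind0[OF G(7) G(5) S0 that] by simp
    have z: "\<forall>w\<in>N u. w \<noteq> v \<longrightarrow> \<mu>a w = 0 \<and> \<mu>b w = 0"
    proof (intro ballI impI)
      fix w assume "w \<in> N u" "w \<noteq> v"
      then have "(1 - t) * \<mu>a w + t * \<mu>b w = 0" using c0 by fastforce
      then show "\<mu>a w = 0 \<and> \<mu>b w = 0" using pos_comb_zero[OF _ _ t] ma(1) mb(1) \<open>w \<in> N u\<close> by blast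
    qed
    show "a \<in> closed_segment u v" using key[OF a ma] z by blast
    show "b \<in> closed_segment u v" using key[OF b mb] z by blast
  qed
  then show ?thesis using uv by (simp add: skel_edge_def)
qed

lemma edge_only_if:
  fixes P :: "'a::euclidean_space set"
  assumes g: "good P N" and e: "skel_edge P u v"
  shows "u \<in> P \<and> v \<in> N u"
proof -
  have uP: "u \<in> P" and vP: "v \<in> P" using edge_ends[OF e] by auto
  have uv: "u \<noteq> v" and F: "closed_segment u v face_of convex hull P" using e by (auto simp: skel_edge_def)
  note G = good_D[OF g uP]
  have poly: "polyhedron (convex hull P)" by (rule polyhedron_convex_hull[OF G(1)])
  have "closed_segment u v exposed_face_of convex hull P" using F exposed_face_of_polyhedron[OF poly] by simp
  then have "\<exists>a b. convex hull P \<subseteq> {x. a \<bullet> x \<le> b} \<and> closed_segment u v = convex hull P \<inter> {x. a \<bullet> x = b}"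
    by (simp add: exposed_face_of_def)
  then obtain a b where H: "convex hull P \<subseteq> {x. a \<bullet> x \<le> b}" "closed_segment u v = convex hull P \<inter> {x. a \<bullet> x = b}"
    by blast
  have "u \<in> convex hull P \<inter> {x. a \<bullet> x = b}" using ends_in_segment(1)[of u v] unfolding H(2) .
  moreover have "v \<in> convex hull P \<inter> {x. a \<bullet> x = b}" using ends_in_segment(2)[of v u] unfolding H(2) .
  ultimately have au: "a \<bullet> u = b" and av: "a \<bullet> v = b" by simp_all
  show ?thesis
  proof (rule ccontr)
    assume "\<not> (u \<in> P \<and> v \<in> N u)"
    then have vN: "v \<notin> N u" using uP by blast
    obtain \<mu> where m: "\<forall>w\<in>N u. 0 \<le> \<mu> w" "v - u = (\<Sum>w\<in>N u. \<mu> w *\<^sub>R (w - u))"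
      using G(6) vP unfolding cc_def by blast
    have neg: "a \<bullet> (w - u) < 0" if w: "w \<in> N u" for w
    proof -
      have wP: "w \<in> P" using w G(3) by blast
      have wh: "w \<in> convex hull P" by (rule hull_inc[OF wP])
      then have "w \<in> {x. a \<bullet> x \<le> b}" using H(1) by (rule rev_subsetD)
      then have "a \<bullet> w \<le> b" by simp
      moreover have "a \<bullet> w \<noteq> b"
      proof
        assume "a \<bullet> w = b"
        then have "w \<in> closed_segment u v" using wh unfolding H(2) by simp
        then have "w = u \<or> w = v"
          using ext_in_segment[OF sphere_ext[OF G(2) wP] hull_inc[OF uP] hull_inc[OF vP]] by blast
        then show False using w G(3) vN by blast
      qed
      ultimately show ?thesis using au by (simp add: inner_diff_right)
    qed
    have "a \<bullet> (v - u) = a \<bullet> (\<Sum>w\<in>N u. \<mu> w *\<^sub>R (w - u))" using m(2) by simp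
    also have "\<dots> = (\<Sum>w\<in>N u. a \<bullet> (\<mu> w *\<^sub>R (w - u)))" by (rule inner_sum_right)
    also have "\<dots> = (\<Sum>w\<in>N u. \<mu> w * (a \<bullet> (w - u)))" by simp
    finally have s1: "a \<bullet> (v - u) = (\<Sum>w\<in>N u. \<mu> w * (a \<bullet> (w - u)))" .
    have "a \<bullet> (v - u) = 0" using au av by (simp add: inner_diff_right)
    with s1 have "(\<Sum>w\<in>N u. \<mu> w * (a \<bullet> (w - u))) = 0" by simp
    then have s2: "(\<Sum>w\<in>N u. - (\<mu> w * (a \<bullet> (w - u)))) = 0" by (simp add: sum_negf)
    have nn: "0 \<le> - (\<mu> w * (a \<bullet> (w - u)))" if "w \<in> N u" for w
      using m(1) neg[OF that] that by (simp add: mult_nonneg_nonpos less_imp_le)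
    have z: "\<forall>w\<in>N u. - (\<mu> w * (a \<bullet> (w - u))) = 0"
      using iffD1[OF sum_nonneg_eq_0_iff[OF G(7) nn] s2] .
    have "\<forall>w\<in>N u. \<mu> w = 0"
    proof (intro ballI)
      fix w assume w: "w \<in> N u"
      then have "\<mu> w * (a \<bullet> (w - u)) = 0" using z by simp
      moreover have "a \<bullet> (w - u) \<noteq> 0" using neg[OF w] by simp
      ultimately show "\<mu> w = 0" by simp
    qed
    then have "v - u = 0" using m(2) by simp
    then show False using uv by simp
  qed
qed

lemma edges:
  fixes P :: "'a::euclidean_space set"
  assumes "good P N"
  shows "skel_edge P u v \<longleftrightarrow> u \<in> P \<and> v \<in> N u"
  using edge_if[OF assms] edge_only_if[OF assms] by blast


lemma seg_param:
  fixes u v y :: "'a::real_vector"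
  shows "y \<in> closed_segment u v \<longleftrightarrow> (\<exists>t. 0 \<le> t \<and> t \<le> 1 \<and> y = u + t *\<^sub>R (v - u))"
proof -
  have "(1 - t) *\<^sub>R u + t *\<^sub>R v = u + t *\<^sub>R (v - u)" for t by (simp add: algebra_simps)
  then show ?thesis unfolding in_segment by auto
qed

lemma quad_roots:
  fixes t s :: real
  assumes "t * (1 - t) = s * (1 - s)"
  shows "t = s \<or> t = 1 - s"
proof -
  have "(t - s) * (1 - t - s) = t * (1 - t) - s * (1 - s)" by (simp add: algebra_simps)
  then have "(t - s) * (1 - t - s) = 0" using assms by simp
  then show ?thesis by auto
qed

lemma tau_lemma:
  fixes u v :: "'a::euclidean_space"
  assumes nu: "norm u = 1" and nv: "norm v = 1" and uv: "u \<noteq> v" and r: "0 < \<rho>" "\<rho> < 1"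
    and card: "card (sphere 0 \<rho> \<inter> closed_segment u v) = 2"
  shows "0 < (1 - sqrt (1 - 4 * ((1 - \<rho>^2) / norm (v - u)^2))) / 2"
    "(1 - sqrt (1 - 4 * ((1 - \<rho>^2) / norm (v - u)^2))) / 2 < 1/2"
    "sphere 0 \<rho> \<inter> closed_segment u v =
      {u + ((1 - sqrt (1 - 4 * ((1 - \<rho>^2) / norm (v - u)^2))) / 2) *\<^sub>R (v - u),
       u + (1 - (1 - sqrt (1 - 4 * ((1 - \<rho>^2) / norm (v - u)^2))) / 2) *\<^sub>R (v - u)}"
proof -
  define D where "D = norm (v - u)^2"
  define c where "c = (1 - \<rho>^2) / D"
  define \<tau> where "\<tau> = (1 - sqrt (1 - 4 * c)) / 2"
  have D: "D > 0" using uv D_def by simp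
  have c: "c > 0" using D r c_def by (simp add: power_less_one_iff abs_of_pos)
  have mem: "u + t *\<^sub>R (v - u) \<in> sphere 0 \<rho> \<longleftrightarrow> t * (1 - t) = c" for t
  proof -
    have "u + t *\<^sub>R (v - u) \<in> sphere 0 \<rho> \<longleftrightarrow> norm (u + t *\<^sub>R (v - u)) = \<rho>" by simp
    also have "\<dots> \<longleftrightarrow> norm (u + t *\<^sub>R (v - u)) ^ 2 = \<rho> ^ 2"
      using r by (metis norm_ge_zero power2_eq_iff_nonneg less_imp_le)
    also have "\<dots> \<longleftrightarrow> 1 - t * (1 - t) * D = \<rho> ^ 2" using seg_norm[OF nu nv] D_def by simp
    also have "\<dots> \<longleftrightarrow> t * (1 - t) = c" using D unfolding c_def by (auto simp: field_simps)
    finally show ?thesis .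
  qed
  define S where "S = sphere 0 \<rho> \<inter> closed_segment u v"
  obtain y1 y2 where S2: "S = {y1, y2}" "y1 \<noteq> y2" using card S_def by (auto simp: card_2_iff)
  have "y1 \<in> closed_segment u v" "y2 \<in> closed_segment u v" using S2 S_def by auto
  then obtain t1 t2 where t1: "0 \<le> t1" "t1 \<le> 1" "y1 = u + t1 *\<^sub>R (v - u)"
    and t2: "0 \<le> t2" "t2 \<le> 1" "y2 = u + t2 *\<^sub>R (v - u)" unfolding seg_param by blast
  have "y1 \<in> sphere 0 \<rho>" "y2 \<in> sphere 0 \<rho>" using S2 S_def by auto
  then have e1: "t1 * (1 - t1) = c" and e2: "t2 * (1 - t2) = c" using mem t1 t2 by auto
  have "t1 \<noteq> t2" using S2 t1 t2 by auto
  then have t12: "t2 = 1 - t1" using quad_roots[of t1 t2] e1 e2 by auto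
  define \<tau>0 where "\<tau>0 = min t1 t2"
  have e0: "\<tau>0 * (1 - \<tau>0) = c" using e1 e2 \<tau>0_def by (simp add: min_def)
  have h: "\<tau>0 < 1/2" using t12 \<open>t1 \<noteq> t2\<close> \<tau>0_def by (auto simp: min_def)
  have "\<tau>0 \<ge> 0" using t1 t2 \<tau>0_def by simp
  moreover have "\<tau>0 \<noteq> 0" using e0 c by auto
  ultimately have p: "\<tau>0 > 0" by simp
  have "1 - 4 * c = (1 - 2 * \<tau>0) ^ 2" using e0 by (simp add: power2_eq_square algebra_simps)
  then have "sqrt (1 - 4 * c) = 1 - 2 * \<tau>0" using h by simp
  then have tt: "\<tau> = \<tau>0" unfolding \<tau>_def by simp
  show "0 < (1 - sqrt (1 - 4 * ((1 - \<rho>^2) / norm (v - u)^2))) / 2"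
    using p tt unfolding \<tau>_def c_def D_def by simp
  show "(1 - sqrt (1 - 4 * ((1 - \<rho>^2) / norm (v - u)^2))) / 2 < 1/2"
    using h tt unfolding \<tau>_def c_def D_def by simp
  have "S = {u + \<tau> *\<^sub>R (v - u), u + (1 - \<tau>) *\<^sub>R (v - u)}"
  proof
    show "S \<subseteq> {u + \<tau> *\<^sub>R (v - u), u + (1 - \<tau>) *\<^sub>R (v - u)}"
    proof
      fix y assume "y \<in> S"
      then have "y \<in> closed_segment u v" "y \<in> sphere 0 \<rho>" using S_def by auto
      then obtain t where t: "0 \<le> t" "t \<le> 1" "y = u + t *\<^sub>R (v - u)" unfolding seg_param by blast
      then have "t * (1 - t) = \<tau> * (1 - \<tau>)" using mem \<open>y \<in> sphere 0 \<rho>\<close> e0 tt by auto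
      then have "t = \<tau> \<or> t = 1 - \<tau>" by (rule quad_roots)
      then show "y \<in> {u + \<tau> *\<^sub>R (v - u), u + (1 - \<tau>) *\<^sub>R (v - u)}" using t by auto
    qed
  next
    have "u + \<tau> *\<^sub>R (v - u) \<in> S"
      unfolding S_def using mem[of \<tau>] e0 tt p h seg_param[of "u + \<tau> *\<^sub>R (v - u)" u v] by auto
    moreover have "u + (1 - \<tau>) *\<^sub>R (v - u) \<in> S"
    proof -
      have "(1 - \<tau>) * (1 - (1 - \<tau>)) = c" using e0 tt by (simp add: algebra_simps)
      then show ?thesis
        unfolding S_def using mem[of "1 - \<tau>"] tt p h seg_param[of "u + (1 - \<tau>) *\<^sub>R (v - u)" u v] by auto
    qed
    ultimately show "{u + \<tau> *\<^sub>R (v - u), u + (1 - \<tau>) *\<^sub>R (v - u)} \<subseteq> S" by simp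
  qed
  then show "sphere 0 \<rho> \<inter> closed_segment u v =
      {u + ((1 - sqrt (1 - 4 * ((1 - \<rho>^2) / norm (v - u)^2))) / 2) *\<^sub>R (v - u),
       u + (1 - (1 - sqrt (1 - 4 * ((1 - \<rho>^2) / norm (v - u)^2))) / 2) *\<^sub>R (v - u)}"
    unfolding S_def \<tau>_def c_def D_def .
qed


locale trs =
  fixes P :: "'a::euclidean_space set" and N :: "'a \<Rightarrow> 'a set" and d :: real and Q :: "'a set"
  assumes g: "good P N" and tr: "trunc P d Q"
begin

definition "\<rho> = 1 - d"
definition "\<tau> u v = (1 - sqrt (1 - 4 * ((1 - \<rho>^2) / norm (v - u)^2))) / 2"
definition "p u v = u + \<tau> u v *\<^sub>R (v - u)"
definition "q u v = (1 / \<rho>) *\<^sub>R p u v"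

lemma rho: "0 < \<rho>" "\<rho> < 1"
  using tr unfolding trunc_def \<rho>_def by auto

lemma EE: "skel_edge P u v \<longleftrightarrow> u \<in> P \<and> v \<in> N u"
  by (rule edges[OF g])

lemma E_sym: "u \<in> P \<Longrightarrow> v \<in> N u \<Longrightarrow> v \<in> P \<and> u \<in> N v"
proof -
  assume "u \<in> P" "v \<in> N u"
  then have "skel_edge P u v" using EE by blast
  then have "skel_edge P v u" unfolding skel_edge_def by (auto simp: closed_segment_commute)
  then show "v \<in> P \<and> u \<in> N v" using EE by blast
qed

lemma E_props:
  assumes "u \<in> P" "v \<in> N u"
  shows "v \<in> P" "u \<noteq> v" "norm u = 1" "norm v = 1"
proof -
  note G = good_D[OF g assms(1)]
  show "v \<in> P" "u \<noteq> v" using G(3) assms by auto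
  then show "norm u = 1" "norm v = 1" using G(2) assms by auto
qed

lemma tau_sym: "\<tau> u v = \<tau> v u"
  unfolding \<tau>_def by (simp add: norm_minus_commute)

lemma card2:
  assumes "u \<in> P" "v \<in> N u"
  shows "card (sphere 0 \<rho> \<inter> closed_segment u v) = 2"
proof -
  have "skel_edge P u v" using EE assms by blast
  then show ?thesis using tr unfolding trunc_def \<rho>_def by blast
qed

lemma tau_bounds:
  assumes "u \<in> P" "v \<in> N u"
  shows "0 < \<tau> u v" "\<tau> u v < 1/2"
  using tau_lemma(1,2)[OF E_props(3,4,2)[OF assms] rho card2[OF assms]] unfolding \<tau>_def by auto

lemma p_vu:
  shows "p v u = u + (1 - \<tau> u v) *\<^sub>R (v - u)"
  unfolding p_def tau_sym[of v u] by (simp add: algebra_simps)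

lemma sph_seg:
  assumes "u \<in> P" "v \<in> N u"
  shows "sphere 0 \<rho> \<inter> closed_segment u v = {p u v, p v u}"
  using tau_lemma(3)[OF E_props(3,4,2)[OF assms] rho card2[OF assms]]
  unfolding p_vu[of v u] unfolding p_def \<tau>_def .

lemma p_in:
  assumes "u \<in> P" "v \<in> N u"
  shows "p u v \<in> sphere 0 \<rho>" "p u v \<in> closed_segment u v" "norm (p u v) = \<rho>"
proof -
  have "p u v \<in> sphere 0 \<rho> \<inter> closed_segment u v" using sph_seg[OF assms] by simp
  then show "p u v \<in> sphere 0 \<rho>" "p u v \<in> closed_segment u v" "norm (p u v) = \<rho>" by auto
qed

lemma norm_q:
  assumes "u \<in> P" "v \<in> N u"
  shows "norm (q u v) = 1"
  using p_in(3)[OF assms] rho unfolding q_def by simp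

lemma Q_eq: "Q = {q u v | u v. u \<in> P \<and> v \<in> N u}"
proof -
  have Q: "Q = (\<lambda>x. (1 / \<rho>) *\<^sub>R x) ` (\<Union>{sphere 0 \<rho> \<inter> closed_segment u v | u v. skel_edge P u v})"
    using tr unfolding trunc_def \<rho>_def by blast
  have U: "(\<Union>{sphere 0 \<rho> \<inter> closed_segment u v | u v. skel_edge P u v}) = {p u v | u v. u \<in> P \<and> v \<in> N u}"
  proof
    show "(\<Union>{sphere 0 \<rho> \<inter> closed_segment u v | u v. skel_edge P u v}) \<subseteq> {p u v | u v. u \<in> P \<and> v \<in> N u}"
    proof
      fix x assume "x \<in> (\<Union>{sphere 0 \<rho> \<inter> closed_segment u v | u v. skel_edge P u v})"
      then obtain u v where uv: "skel_edge P u v" "x \<in> sphere 0 \<rho> \<inter> closed_segment u v" by blast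
      then have E: "u \<in> P" "v \<in> N u" using EE by auto
      then have "x = p u v \<or> x = p v u" using sph_seg uv(2) by blast
      then show "x \<in> {p u v | u v. u \<in> P \<and> v \<in> N u}" using E E_sym[OF E] by blast
    qed
  next
    show "{p u v | u v. u \<in> P \<and> v \<in> N u} \<subseteq> (\<Union>{sphere 0 \<rho> \<inter> closed_segment u v | u v. skel_edge P u v})"
    proof
      fix x assume "x \<in> {p u v | u v. u \<in> P \<and> v \<in> N u}"
      then obtain u v where E: "u \<in> P" "v \<in> N u" and x: "x = p u v" by blast
      have "skel_edge P u v" using EE E by blast
      moreover have "x \<in> sphere 0 \<rho> \<inter> closed_segment u v" using sph_seg[OF E] x by simp
      ultimately show "x \<in> (\<Union>{sphere 0 \<rho> \<inter> closed_segment u v | u v. skel_edge P u v})" by blast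
    qed
  qed
  show ?thesis unfolding Q U q_def by blast
qed

lemma p_inj:
  assumes E: "u \<in> P" "v \<in> N u" and E': "u' \<in> P" "v' \<in> N u'" and eq: "p u v = p u' v'"
  shows "u = u' \<and> v = v'"
proof -
  note G = good_D[OF g E(1)]
  have vP: "v \<in> P" and v'P: "v' \<in> P" using E_props E E' by blast+
  have F: "closed_segment u v face_of convex hull P" using EE E unfolding skel_edge_def by blast
  have y1: "p u v \<in> closed_segment u v" by (rule p_in(2)[OF E])
  have y2: "p u v \<in> closed_segment u' v'" using p_in(2)[OF E'] eq by simp
  have "norm (p u v) = \<rho>" by (rule p_in(3)[OF E])
  then have ne: "p u v \<noteq> u'" "p u v \<noteq> v'" using E_props(3,4)[OF E'] rho by auto
  have uv': "u' \<noteq> v'" using E_props(2)[OF E'] .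
  have "p u v \<in> open_segment u' v'" using y2 ne unfolding open_segment_def by blast
  moreover have "u' \<in> convex hull P" "v' \<in> convex hull P" by (rule hull_inc[OF E'(1)], rule hull_inc[OF v'P])
  ultimately have "u' \<in> closed_segment u v" "v' \<in> closed_segment u v" using F y1 unfolding face_of_def by blast+
  moreover have "u \<in> convex hull P" "v \<in> convex hull P" by (rule hull_inc[OF E(1)], rule hull_inc[OF vP])
  ultimately have A: "u' = u \<or> u' = v" "v' = u \<or> v' = v"
    using ext_in_segment sphere_ext[OF G(2) E'(1)] sphere_ext[OF G(2) v'P] by blast+
  show ?thesis
  proof (cases "u' = u")
    case True
    then show ?thesis using A uv' by auto
  next
    case False
    then have "u' = v" "v' = u" using A uv' by auto
    then have "p v u = p u v" using eq by simp
    then have "(1 - \<tau> u v) *\<^sub>R (v - u) = \<tau> u v *\<^sub>R (v - u)" unfolding p_vu[of v u] p_def[of u v] by simp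
    then have "((1 - \<tau> u v) - \<tau> u v) *\<^sub>R (v - u) = 0" by (simp only: scaleR_diff_left) simp
    moreover have "(1 - \<tau> u v) - \<tau> u v = 1 - 2 * \<tau> u v" by simp
    ultimately have "(1 - 2 * \<tau> u v) *\<^sub>R (v - u) = 0" by simp
    moreover have "1 - 2 * \<tau> u v \<noteq> 0" using tau_bounds[OF E] by simp
    moreover have "v - u \<noteq> 0" using E_props(2)[OF E] by simp
    ultimately show ?thesis by simp
  qed
qed

lemma q_inj:
  assumes "u \<in> P" "v \<in> N u" "u' \<in> P" "v' \<in> N u'" "q u v = q u' v'"
  shows "u = u' \<and> v = v'"
proof -
  have "p u v = p u' v'" using assms(5) rho unfolding q_def by simp
  then show ?thesis using p_inj assms by blast
qed

end


lemma ext_sub: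
  assumes "x extreme_point_of S" "convex hull T \<subseteq> S" "x \<in> convex hull T"
  shows "x \<in> T"
proof -
  have "x extreme_point_of convex hull T"
    using assms unfolding extreme_point_of_def by blast
  then show ?thesis by (rule extreme_point_of_convex_hull)
qed

context trs
begin

lemma p_hull:
  assumes "u \<in> P" "w \<in> N u"
  shows "p u w \<in> convex hull P"
proof -
  have "closed_segment u w \<subseteq> convex hull P"
    by (rule closed_segment_subset[OF hull_inc[OF assms(1)] hull_inc[OF E_props(1)[OF assms]] convex_convex_hull])
  then show ?thesis using p_in(2)[OF assms] by blast
qed

lemma p_scale:
  assumes "u \<in> P" "w \<in> N u"
  shows "(c / \<tau> u w) *\<^sub>R p u w = (c / \<tau> u w) *\<^sub>R u + c *\<^sub>R (w - u)"
proof -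
  have t: "\<tau> u w \<noteq> 0" using tau_bounds[OF assms] by simp
  have "(c / \<tau> u w) *\<^sub>R p u w = (c / \<tau> u w) *\<^sub>R u + ((c / \<tau> u w) * \<tau> u w) *\<^sub>R (w - u)"
    unfolding p_def by (simp add: scaleR_add_right)
  also have "(c / \<tau> u w) * \<tau> u w = c" using t by simp
  finally show ?thesis .
qed

lemma G1:
  assumes u: "u \<in> P" and x: "x \<in> P" "x \<noteq> u" and lam: "\<forall>w\<in>N u. 0 \<le> lm w"
    and xe: "x - u = (\<Sum>w\<in>N u. lm w *\<^sub>R (w - u))"
  shows "(\<Sum>w\<in>N u. lm w / \<tau> u w) \<ge> 1"
proof (rule ccontr)
  note G = good_D[OF g u]
  define gg where "gg = (\<Sum>w\<in>N u. lm w / \<tau> u w)"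
  assume "\<not> (\<Sum>w\<in>N u. lm w / \<tau> u w) \<ge> 1"
  then have gl: "gg < 1" unfolding gg_def by simp
  define a where "a w = (if w = u then 1 - gg else lm w / \<tau> u w)" for w
  define y where "y w = (if w = u then u else p u w)" for w
  define I where "I = insert u (N u)"
  have uN: "u \<notin> N u" using G(3) by blast
  have finI: "finite I" using G(7) I_def by simp
  have sa: "(\<Sum>w\<in>I. a w) = 1"
  proof -
    have "(\<Sum>w\<in>I. a w) = a u + (\<Sum>w\<in>N u. a w)" unfolding I_def using G(7) uN by simp
    also have "(\<Sum>w\<in>N u. a w) = gg" unfolding gg_def a_def using uN by (intro sum.cong) auto
    finally show ?thesis unfolding a_def by simp
  qed
  have an: "a w \<ge> 0" if "w \<in> I" for w
  proof (cases "w = u")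
    case True then show ?thesis using gl a_def by simp
  next
    case False
    then have "w \<in> N u" using that I_def by simp
    then have "0 \<le> lm w" "0 < \<tau> u w" using lam tau_bounds(1)[OF u] by auto
    then show ?thesis using False a_def by simp
  qed
  define T where "T = y ` I"
  have yT: "y w \<in> convex hull T" if "w \<in> I" for w
    using that T_def by (simp add: hull_inc)
  have sx: "(\<Sum>w\<in>I. a w *\<^sub>R y w) = x"
  proof -
    have "(\<Sum>w\<in>I. a w *\<^sub>R y w) = a u *\<^sub>R y u + (\<Sum>w\<in>N u. a w *\<^sub>R y w)"
      unfolding I_def using G(7) uN by simp
    also have "(\<Sum>w\<in>N u. a w *\<^sub>R y w) = (\<Sum>w\<in>N u. (lm w / \<tau> u w) *\<^sub>R u + lm w *\<^sub>R (w - u))"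
    proof (rule sum.cong)
      fix w assume w: "w \<in> N u"
      then have "w \<noteq> u" using uN by blast
      then show "a w *\<^sub>R y w = (lm w / \<tau> u w) *\<^sub>R u + lm w *\<^sub>R (w - u)"
        unfolding a_def y_def using p_scale[OF u w] by simp
    qed simp
    also have "\<dots> = gg *\<^sub>R u + (x - u)"
      unfolding gg_def xe by (simp add: sum.distrib scaleR_sum_left)
    finally show ?thesis unfolding a_def y_def by (simp add: algebra_simps)
  qed
  have "x \<in> convex hull T"
    using convex_sum[where S=I and C="convex hull T" and a=a and y=y, OF finI convex_convex_hull sa an yT] sx by simp
  moreover have "convex hull T \<subseteq> convex hull P"
  proof (rule hull_minimal)
    show "T \<subseteq> convex hull P"
    proof
      fix z assume "z \<in> T"
      then obtain w where w: "w \<in> I" "z = y w" using T_def by blast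
      show "z \<in> convex hull P"
      proof (cases "w = u")
        case True then show ?thesis using w y_def hull_inc[OF u] by simp
      next
        case False then have "w \<in> N u" using w I_def by simp
        then show ?thesis using w y_def p_hull[OF u] False by simp
      qed
    qed
    show "convex (convex hull P)" by simp
  qed
  ultimately have "x \<in> T" using ext_sub sphere_ext[OF G(2) x(1)] by blast
  then obtain w where w: "w \<in> I" "x = y w" using T_def by blast
  show False
  proof (cases "w = u")
    case True then show False using w y_def x(2) by simp
  next
    case False then have wN: "w \<in> N u" using w I_def by simp
    then have "norm x = \<rho>" using w y_def False p_in(3)[OF u] by simp
    moreover have "norm x = 1" using G(2) x(1) by auto
    ultimately show False using rho by simp
  qed
qed

lemma G2:
  assumes u: "u \<in> P" and y: "y \<in> P" and z: "z \<in> N y"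
  shows "\<exists>lm. (\<forall>w\<in>N u. 0 \<le> lm w) \<and> p y z - u = (\<Sum>w\<in>N u. lm w *\<^sub>R (w - u)) \<and>
             (\<Sum>w\<in>N u. lm w / \<tau> u w) \<ge> 1"
proof -
  note G = good_D[OF g u]
  show ?thesis
  proof (cases "y = u")
    case True
    define lm where "lm w = (if w = z then \<tau> u z else 0)" for w
    have zN: "z \<in> N u" using z True by simp
    have "p y z - u = lm z *\<^sub>R (z - u)" unfolding True p_def lm_def by simp
    also have "\<dots> = (\<Sum>w\<in>N u. lm w *\<^sub>R (w - u))"
      by (rule sum_single[symmetric, OF G(7) zN]) (simp add: lm_def)
    finally have e: "p y z - u = (\<Sum>w\<in>N u. lm w *\<^sub>R (w - u))" .
    have "(\<Sum>w\<in>N u. lm w / \<tau> u w) = lm z / \<tau> u z"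
      by (rule sum.remove[OF G(7) zN, THEN trans]) (simp add: lm_def)
    also have "\<dots> = 1" using tau_bounds[OF u zN] lm_def by simp
    finally show ?thesis using e tau_bounds[OF u zN] lm_def by (intro exI[of _ lm]) auto
  next
    case yu: False
    show ?thesis
    proof (cases "z = u")
      case True
      have yN: "y \<in> N u" using E_sym[OF y z] True by simp
      define lm where "lm w = (if w = y then 1 - \<tau> u y else 0)" for w
      have "p y z - u = (1 - \<tau> u y) *\<^sub>R (y - u)" unfolding True p_vu[of y u] by simp
      also have "\<dots> = lm y *\<^sub>R (y - u)" using lm_def by simp
      also have "\<dots> = (\<Sum>w\<in>N u. lm w *\<^sub>R (w - u))"
        by (rule sum_single[symmetric, OF G(7) yN]) (simp add: lm_def)
      finally have e: "p y z - u = (\<Sum>w\<in>N u. lm w *\<^sub>R (w - u))" .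
      have "(\<Sum>w\<in>N u. lm w / \<tau> u w) = lm y / \<tau> u y"
        by (rule sum.remove[OF G(7) yN, THEN trans]) (simp add: lm_def)
      also have "\<dots> = (1 - \<tau> u y) / \<tau> u y" using lm_def by simp
      also have "\<dots> \<ge> 1" using tau_bounds[OF u yN] by (simp add: field_simps)
      finally show ?thesis using e tau_bounds[OF u yN] lm_def by (intro exI[of _ lm]) auto
    next
      case zu: False
      have zP: "z \<in> P" using E_props(1)[OF y z] .
      obtain lmy where ly: "\<forall>w\<in>N u. 0 \<le> lmy w" "y - u = (\<Sum>w\<in>N u. lmy w *\<^sub>R (w - u))"
        using G(6) y unfolding cc_def by blast
      obtain lmz where lz: "\<forall>w\<in>N u. 0 \<le> lmz w" "z - u = (\<Sum>w\<in>N u. lmz w *\<^sub>R (w - u))"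
        using G(6) zP unfolding cc_def by blast
      have gy: "(\<Sum>w\<in>N u. lmy w / \<tau> u w) \<ge> 1" by (rule G1[OF u y yu ly])
      have gz: "(\<Sum>w\<in>N u. lmz w / \<tau> u w) \<ge> 1" by (rule G1[OF u zP zu lz])
      define t where "t = \<tau> y z"
      have t: "0 < t" "t < 1/2" using tau_bounds[OF y z] t_def by auto
      define lm where "lm w = (1 - t) * lmy w + t * lmz w" for w
      have "p y z - u = (1 - t) *\<^sub>R (y - u) + t *\<^sub>R (z - u)"
        unfolding p_def t_def by (simp add: algebra_simps)
      also have "\<dots> = (\<Sum>w\<in>N u. lm w *\<^sub>R (w - u))"
        unfolding ly(2) lz(2) lm_def by (simp add: scaleR_sum_right sum.distrib scaleR_add_left)
      finally have e: "p y z - u = (\<Sum>w\<in>N u. lm w *\<^sub>R (w - u))" .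
      have "(\<Sum>w\<in>N u. lm w / \<tau> u w) = (1 - t) * (\<Sum>w\<in>N u. lmy w / \<tau> u w) + t * (\<Sum>w\<in>N u. lmz w / \<tau> u w)"
        unfolding lm_def by (simp add: sum_distrib_left sum.distrib add_divide_distrib)
      also have "\<dots> \<ge> (1 - t) * 1 + t * 1"
        using gy gz t by (intro add_mono mult_left_mono) auto
      finally have "(\<Sum>w\<in>N u. lm w / \<tau> u w) \<ge> 1" by simp
      moreover have "\<forall>w\<in>N u. 0 \<le> lm w" using ly(1) lz(1) t lm_def by simp
      ultimately show ?thesis using e by blast
    qed
  qed
qed

end


context trs
begin

definition N' :: "'a \<Rightarrow> 'a set" where
  "N' x = {y. \<exists>u v. u \<in> P \<and> v \<in> N u \<and> x = q u v \<and> (y = q v u \<or> (\<exists>w\<in>N u. w \<noteq> v \<and> y = q u w))}"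

lemma N'_eq:
  assumes E: "u \<in> P" "v \<in> N u"
  shows "N' (q u v) = insert (q v u) (q u ` (N u - {v}))"
proof
  show "N' (q u v) \<subseteq> insert (q v u) (q u ` (N u - {v}))"
  proof
    fix y assume "y \<in> N' (q u v)"
    then obtain u' v' where E': "u' \<in> P" "v' \<in> N u'" and eq: "q u v = q u' v'"
      and y: "y = q v' u' \<or> (\<exists>w\<in>N u'. w \<noteq> v' \<and> y = q u' w)" unfolding N'_def by blast
    have "u' = u" "v' = v" using q_inj[OF E E' eq] by auto
    then show "y \<in> insert (q v u) (q u ` (N u - {v}))" using y by auto
  qed
next
  show "insert (q v u) (q u ` (N u - {v})) \<subseteq> N' (q u v)"
    unfolding N'_def using E by blast
qed

lemma qvu_notin:
  assumes E: "u \<in> P" "v \<in> N u"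
  shows "q v u \<notin> q u ` (N u - {v})"
proof
  assume "q v u \<in> q u ` (N u - {v})"
  then obtain w where w: "w \<in> N u" "w \<noteq> v" "q v u = q u w" by blast
  have "v = u" using q_inj[OF conjunct1[OF E_sym[OF E]] conjunct2[OF E_sym[OF E]] E(1) w(1) w(3)] by simp
  then show False using E_props(2)[OF E] by simp
qed

lemma q_inj_on:
  assumes "u \<in> P"
  shows "inj_on (q u) (N u)"
  using q_inj[OF assms _ assms] by (auto simp: inj_on_def)

lemma q_in_Q: "u \<in> P \<Longrightarrow> v \<in> N u \<Longrightarrow> q u v \<in> Q"
  using Q_eq by blast

lemma N'_sub:
  assumes E: "u \<in> P" "v \<in> N u"
  shows "N' (q u v) \<subseteq> Q - {q u v}"
proof -
  have vu: "v \<in> P" "u \<in> N v" using E_sym[OF E] by auto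
  have "q v u \<in> Q" using q_in_Q[OF vu] .
  moreover have "q v u \<noteq> q u v" using q_inj[OF vu E] E_props(2)[OF E] by auto
  moreover have "q u w \<in> Q - {q u v}" if "w \<in> N u - {v}" for w
    using q_in_Q[OF E(1)] q_inj[OF E(1) _ E] that by auto
  ultimately show ?thesis unfolding N'_eq[OF E] by auto
qed

lemma N'_card:
  assumes E: "u \<in> P" "v \<in> N u"
  shows "card (N' (q u v)) = DIM('a)"
proof -
  note G = good_D[OF g E(1)]
  have "card (q u ` (N u - {v})) = card (N u - {v})"
    by (rule card_image) (rule inj_on_subset[OF q_inj_on[OF E(1)]], blast)
  also have "\<dots> = DIM('a) - 1" using G(4) G(7) E(2) by simp
  finally have "card (N' (q u v)) = Suc (DIM('a) - 1)"
    unfolding N'_eq[OF E] using qvu_notin[OF E] G(7) by simp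
  then show ?thesis using DIM_positive[where 'a='a] by simp
qed

lemma diff_vu:
  assumes E: "u \<in> P" "v \<in> N u"
  shows "q v u - q u v = ((1 - 2 * \<tau> u v) / \<rho>) *\<^sub>R (v - u)"
proof -
  have "p v u - p u v = (1 - \<tau> u v) *\<^sub>R (v - u) - \<tau> u v *\<^sub>R (v - u)"
    unfolding p_vu[of v u] p_def[of u v] by simp
  also have "\<dots> = ((1 - \<tau> u v) - \<tau> u v) *\<^sub>R (v - u)" by (rule scaleR_diff_left[symmetric])
  finally have "p v u - p u v = ((1 - \<tau> u v) - \<tau> u v) *\<^sub>R (v - u)" .
  moreover have "(1 - \<tau> u v) - \<tau> u v = 1 - 2 * \<tau> u v" by simp
  ultimately have "p v u - p u v = (1 - 2 * \<tau> u v) *\<^sub>R (v - u)" by metis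
  then show ?thesis unfolding q_def by (simp add: scaleR_diff_right[symmetric])
qed

lemma diff_uw:
  shows "q u w - q u v = (1 / \<rho>) *\<^sub>R (\<tau> u w *\<^sub>R (w - u) - \<tau> u v *\<^sub>R (v - u))"
  unfolding q_def p_def by (simp add: scaleR_diff_right[symmetric])

lemma N'_indep:
  assumes E: "u \<in> P" "v \<in> N u"
  shows "independent ((\<lambda>b. b - q u v) ` N' (q u v))"
proof -
  note G = good_D[OF g E(1)]
  define a where "a = q u v"
  define B where "B = (\<lambda>b. b - a) ` N' a"
  have finN': "finite (N' a)" unfolding a_def N'_eq[OF E] using G(7) by simp
  have vB: "v - u \<in> span B"
  proof -
    have "q v u - a \<in> B" unfolding B_def a_def N'_eq[OF E] by blast
    then have "(\<rho> / (1 - 2 * \<tau> u v)) *\<^sub>R (q v u - a) \<in> span B" by (intro span_mul span_base)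
    moreover have "(\<rho> / (1 - 2 * \<tau> u v)) *\<^sub>R (q v u - a) = v - u"
      unfolding a_def diff_vu[OF E] using rho tau_bounds[OF E] by simp
    ultimately show ?thesis by simp
  qed
  have wB: "w - u \<in> span B" if w: "w \<in> N u" for w
  proof (cases "w = v")
    case True then show ?thesis using vB by simp
  next
    case False
    have "q u w - a \<in> B" unfolding B_def a_def N'_eq[OF E] using w False by blast
    then have "\<rho> *\<^sub>R (q u w - a) + \<tau> u v *\<^sub>R (v - u) \<in> span B"
      by (intro span_add span_mul span_base vB)
    then have "(1 / \<tau> u w) *\<^sub>R (\<rho> *\<^sub>R (q u w - a) + \<tau> u v *\<^sub>R (v - u)) \<in> span B"
      by (rule span_mul)
    moreover have "(1 / \<tau> u w) *\<^sub>R (\<rho> *\<^sub>R (q u w - a) + \<tau> u v *\<^sub>R (v - u)) = w - u"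
      unfolding a_def diff_uw using rho tau_bounds[OF E(1) w] by simp
    ultimately show ?thesis by simp
  qed
  have "UNIV \<subseteq> span ((\<lambda>w. w - u) ` N u)"
  proof -
    have inj: "inj_on (\<lambda>w. w - u) (N u)" by (auto simp: inj_on_def)
    have "card ((\<lambda>w. w - u) ` N u) = dim (UNIV :: 'a set)"
      using card_image[OF inj] G(4) by simp
    then show ?thesis using card_eq_dim[of "(\<lambda>w. w - u) ` N u" UNIV] G(5) G(7) by simp
  qed
  also have "span ((\<lambda>w. w - u) ` N u) \<subseteq> span B"
    by (rule span_minimal) (use wB in auto)
  finally have sp: "UNIV \<subseteq> span B" .
  have "card B \<le> card (N' a)" unfolding B_def by (rule card_image_le[OF finN'])
  also have "\<dots> = DIM('a)" unfolding a_def by (rule N'_card[OF E])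
  finally have "card B \<le> dim (UNIV :: 'a set)" by simp
  then have "independent B"
    using card_le_dim_spanning[of B UNIV] sp finN' B_def by simp
  then show ?thesis unfolding B_def a_def .
qed

end


context trs
begin

lemma ident:
  assumes E: "u \<in> P" "v \<in> N u" and pe: "pp - u = (\<Sum>w\<in>N u. lm w *\<^sub>R (w - u))"
  shows "pp - p u v = (\<Sum>w\<in>N u - {v}. (lm w / \<tau> u w) *\<^sub>R (p u w - p u v)) +
     ((((\<Sum>w\<in>N u. lm w / \<tau> u w) - 1) * \<tau> u v) / (1 - 2 * \<tau> u v)) *\<^sub>R (p v u - p u v)"
proof -
  note G = good_D[OF g E(1)]
  define T where "T = \<tau> u v"
  define e where "e = v - u"
  define S' where "S' = N u - {v}"
  define A where "A = (\<Sum>w\<in>S'. lm w *\<^sub>R (w - u))"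
  define K where "K = (\<Sum>w\<in>S'. lm w / \<tau> u w)"
  define gg where "gg = (\<Sum>w\<in>N u. lm w / \<tau> u w)"
  have T: "0 < T" "T < 1/2" using tau_bounds[OF E] T_def by auto
  have finS: "finite S'" using G(7) S'_def by simp
  have s1: "(\<Sum>w\<in>S'. (lm w / \<tau> u w) *\<^sub>R (p u w - p u v)) = A - (K * T) *\<^sub>R e"
  proof -
    have "(\<Sum>w\<in>S'. (lm w / \<tau> u w) *\<^sub>R (p u w - p u v)) =
          (\<Sum>w\<in>S'. lm w *\<^sub>R (w - u) - ((lm w / \<tau> u w) * T) *\<^sub>R e)"
    proof (rule sum.cong)
      fix w assume "w \<in> S'"
      then have w: "w \<in> N u" using S'_def by simp
      have tw: "\<tau> u w \<noteq> 0" using tau_bounds[OF E(1) w] by simp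
      have "p u w - p u v = \<tau> u w *\<^sub>R (w - u) - T *\<^sub>R e" unfolding p_def T_def e_def by simp
      then have "(lm w / \<tau> u w) *\<^sub>R (p u w - p u v) =
          ((lm w / \<tau> u w) * \<tau> u w) *\<^sub>R (w - u) - ((lm w / \<tau> u w) * T) *\<^sub>R e"
        by (simp add: scaleR_diff_right)
      also have "(lm w / \<tau> u w) * \<tau> u w = lm w" using tw by simp
      finally show "(lm w / \<tau> u w) *\<^sub>R (p u w - p u v) = lm w *\<^sub>R (w - u) - ((lm w / \<tau> u w) * T) *\<^sub>R e" .
    qed simp
    also have "\<dots> = A - (\<Sum>w\<in>S'. (lm w / \<tau> u w) * T) *\<^sub>R e"
      unfolding A_def by (simp add: sum_subtractf scaleR_sum_left)
    also have "(\<Sum>w\<in>S'. (lm w / \<tau> u w) * T) = K * T" unfolding K_def by (simp add: sum_distrib_right)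
    finally show ?thesis .
  qed
  have d: "p v u - p u v = (1 - 2 * T) *\<^sub>R e"
  proof -
    have "p v u - p u v = (1 - T) *\<^sub>R e - T *\<^sub>R e"
      unfolding p_vu[of v u] p_def[of u v] T_def e_def by simp
    also have "\<dots> = ((1 - T) - T) *\<^sub>R e" by (rule scaleR_diff_left[symmetric])
    also have "(1 - T) - T = 1 - 2 * T" by simp
    finally show ?thesis .
  qed
  have s2: "(((gg - 1) * T) / (1 - 2 * T)) *\<^sub>R (p v u - p u v) = ((gg - 1) * T) *\<^sub>R e"
    unfolding d using T by simp
  have gsplit: "gg = lm v / T + K"
    unfolding gg_def K_def S'_def T_def using sum.remove[OF G(7) E(2)] by simp
  have tot: "pp - u = lm v *\<^sub>R e + A"
    unfolding pe A_def S'_def e_def using sum.remove[OF G(7) E(2)] by simp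
  have coef: "(gg - 1) * T - K * T = lm v - T" using gsplit T by (simp add: field_simps)
  have "A - (K * T) *\<^sub>R e + ((gg - 1) * T) *\<^sub>R e = A + ((gg - 1) * T - K * T) *\<^sub>R e"
    by (simp add: scaleR_diff_left algebra_simps)
  also have "\<dots> = A + (lm v - T) *\<^sub>R e" unfolding coef ..
  also have "\<dots> = (pp - u) - T *\<^sub>R e" unfolding tot by (simp add: scaleR_diff_left algebra_simps)
  also have "\<dots> = pp - p u v" unfolding p_def T_def e_def by simp
  finally show ?thesis
    using s1 s2 unfolding S'_def gg_def T_def by simp
qed

lemma cc_Q:
  assumes E: "u \<in> P" "v \<in> N u" and x: "x \<in> Q"
  shows "cc (q u v) (N' (q u v)) x"
proof -
  note G = good_D[OF g E(1)]
  define a where "a = q u v"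
  define S' where "S' = N u - {v}"
  define T where "T = \<tau> u v"
  have T: "0 < T" "T < 1/2" using tau_bounds[OF E] T_def by auto
  obtain y z where yz: "y \<in> P" "z \<in> N y" and xe: "x = q y z" using x Q_eq by blast
  obtain lm where lm: "\<forall>w\<in>N u. 0 \<le> lm w" "p y z - u = (\<Sum>w\<in>N u. lm w *\<^sub>R (w - u))"
    and gg: "(\<Sum>w\<in>N u. lm w / \<tau> u w) \<ge> 1"
    using G2[OF E(1) yz] by blast
  define c where "c w = lm w / \<tau> u w" for w
  define c0 where "c0 = (((\<Sum>w\<in>N u. lm w / \<tau> u w) - 1) * T) / (1 - 2 * T)"
  have c0: "c0 \<ge> 0" unfolding c0_def using gg T by simp
  have c: "c w \<ge> 0" if "w \<in> N u" for w using lm(1) tau_bounds(1)[OF E(1) that] that c_def by simp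
  have id: "p y z - p u v = (\<Sum>w\<in>S'. c w *\<^sub>R (p u w - p u v)) + c0 *\<^sub>R (p v u - p u v)"
    using ident[OF E lm(2)] unfolding c_def c0_def S'_def T_def .
  have qd: "q b1 b2 - q u v = (1 / \<rho>) *\<^sub>R (p b1 b2 - p u v)" for b1 b2
    unfolding q_def by (simp add: scaleR_diff_right)
  have xa: "x - a = (\<Sum>w\<in>S'. c w *\<^sub>R (q u w - a)) + c0 *\<^sub>R (q v u - a)"
    unfolding xe a_def qd id by (simp add: scaleR_add_right scaleR_sum_right)
  define \<mu> where "\<mu> b = (if b = q v u then c0 else c (inv_into S' (q u) b))" for b
  have injS: "inj_on (q u) S'" using inj_on_subset[OF q_inj_on[OF E(1)]] S'_def by blast
  have finS: "finite S'" using G(7) S'_def by simp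
  have notin: "q v u \<notin> q u ` S'" using qvu_notin[OF E] S'_def by simp
  have "(\<Sum>b\<in>N' a. \<mu> b *\<^sub>R (b - a)) = \<mu> (q v u) *\<^sub>R (q v u - a) + (\<Sum>b\<in>q u ` S'. \<mu> b *\<^sub>R (b - a))"
    unfolding a_def N'_eq[OF E] S'_def[symmetric] using finS notin by simp
  also have "(\<Sum>b\<in>q u ` S'. \<mu> b *\<^sub>R (b - a)) = (\<Sum>w\<in>S'. \<mu> (q u w) *\<^sub>R (q u w - a))"
    by (rule sum.reindex[OF injS, unfolded comp_def])
  also have "\<dots> = (\<Sum>w\<in>S'. c w *\<^sub>R (q u w - a))"
  proof (rule sum.cong)
    fix w assume w: "w \<in> S'"
    have "q u w \<noteq> q v u" using notin w by (metis imageI)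
    then show "\<mu> (q u w) *\<^sub>R (q u w - a) = c w *\<^sub>R (q u w - a)"
      unfolding \<mu>_def using inv_into_f_f[OF injS w] by simp
  qed simp
  finally have "(\<Sum>b\<in>N' a. \<mu> b *\<^sub>R (b - a)) = x - a" using xa \<mu>_def by simp
  moreover have "\<forall>b\<in>N' a. 0 \<le> \<mu> b"
  proof
    fix b assume "b \<in> N' a"
    show "0 \<le> \<mu> b"
    proof (cases "b = q v u")
      case True then show ?thesis using c0 \<mu>_def by simp
    next
      case False
      then have "b \<in> q u ` S'" using \<open>b \<in> N' a\<close> unfolding a_def N'_eq[OF E] S'_def by blast
      then have "inv_into S' (q u) b \<in> S'" by (rule inv_into_into)
      then have "c (inv_into S' (q u) b) \<ge> 0" using c S'_def by blast
      then show ?thesis using False \<mu>_def by simp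
    qed
  qed
  ultimately show ?thesis unfolding cc_def a_def by (metis (no_types, lifting))
qed

lemma good_Q: "good Q N'"
proof -
  have "Q = (\<lambda>(u, v). q u v) ` (SIGMA u:P. N u)" unfolding Q_eq by auto
  moreover have "finite (SIGMA u:P. N u)"
  proof (rule finite_SigmaI)
    show "finite P" using g unfolding good_def by blast
    show "finite (N u)" if "u \<in> P" for u using good_D(7)[OF g that] .
  qed
  ultimately have fQ: "finite Q" by simp
  have sQ: "Q \<subseteq> sphere 0 1" unfolding Q_eq using norm_q by auto
  have "\<forall>a\<in>Q. N' a \<subseteq> Q - {a} \<and> card (N' a) = DIM('a) \<and> independent ((\<lambda>w. w - a) ` N' a) \<and>
        (\<forall>x\<in>Q. cc a (N' a) x)"
  proof
    fix a assume "a \<in> Q"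
    then obtain u v where E: "u \<in> P" "v \<in> N u" and a: "a = q u v" using Q_eq by blast
    show "N' a \<subseteq> Q - {a} \<and> card (N' a) = DIM('a) \<and> independent ((\<lambda>w. w - a) ` N' a) \<and>
        (\<forall>x\<in>Q. cc a (N' a) x)"
      using N'_sub[OF E] N'_card[OF E] N'_indep[OF E] cc_Q[OF E] a by simp
  qed
  then show ?thesis unfolding good_def using fQ sQ by blast
qed

lemma edges_Q:
  assumes E: "u \<in> P" "v \<in> N u" and E': "u' \<in> P" "v' \<in> N u'"
  shows "skel_edge Q (q u v) (q u' v') \<longleftrightarrow> (u = u' \<and> v \<noteq> v') \<or> (u' = v \<and> v' = u)"
proof -
  have vu: "v \<in> P" "u \<in> N v" using E_sym[OF E] by auto
  have "skel_edge Q (q u v) (q u' v') \<longleftrightarrow> q u' v' \<in> N' (q u v)"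
    using edges[OF good_Q] q_in_Q[OF E] by blast
  also have "\<dots> \<longleftrightarrow> q u' v' = q v u \<or> (\<exists>w\<in>N u - {v}. q u' v' = q u w)"
    unfolding N'_eq[OF E] by blast
  also have "\<dots> \<longleftrightarrow> (u = u' \<and> v \<noteq> v') \<or> (u' = v \<and> v' = u)"
  proof
    assume "q u' v' = q v u \<or> (\<exists>w\<in>N u - {v}. q u' v' = q u w)"
    then show "(u = u' \<and> v \<noteq> v') \<or> (u' = v \<and> v' = u)"
    proof
      assume "q u' v' = q v u" then show ?thesis using q_inj[OF E' vu] by blast
    next
      assume "\<exists>w\<in>N u - {v}. q u' v' = q u w"
      then obtain w where w: "w \<in> N u" "w \<noteq> v" "q u' v' = q u w" by blast
      then show ?thesis using q_inj[OF E' E(1) w(1) w(3)] by blast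
    qed
  next
    assume "(u = u' \<and> v \<noteq> v') \<or> (u' = v \<and> v' = u)"
    then show "q u' v' = q v u \<or> (\<exists>w\<in>N u - {v}. q u' v' = q u w)"
    proof
      assume "u = u' \<and> v \<noteq> v'" then show ?thesis using E' by blast
    next
      assume "u' = v \<and> v' = u" then show ?thesis by blast
    qed
  qed
  finally show ?thesis .
qed

end


lemma vertices_good:
  fixes P :: "'a::euclidean_space set"
  assumes "good P N"
  shows "{x. skel_vertex P x} = P"
proof
  show "{x. skel_vertex P x} \<subseteq> P"
    unfolding skel_vertex_def using extreme_point_of_convex_hull by blast
  show "P \<subseteq> {x. skel_vertex P x}"
  proof
    fix x assume "x \<in> P"
    moreover have "P \<subseteq> sphere 0 1" using assms unfolding good_def by blast
    ultimately show "x \<in> {x. skel_vertex P x}" unfolding skel_vertex_def using sphere_ext by blast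
  qed
qed

lemma good_base:
  fixes P :: "'a::euclidean_space set"
  assumes s: "P \<subseteq> sphere 0 1" and c: "card P = DIM('a) + 1" and ai: "\<not> affine_dependent P"
  shows "good P (\<lambda>u. P - {u})"
proof -
  have fP: "finite P" using c by (metis card_ge_0_finite add_gr_0 zero_less_one)
  have "\<forall>u\<in>P. P - {u} \<subseteq> P - {u} \<and> card (P - {u}) = DIM('a) \<and> independent ((\<lambda>w. w - u) ` (P - {u})) \<and>
        (\<forall>x\<in>P. cc u (P - {u}) x)"
  proof
    fix u assume u: "u \<in> P"
    have c1: "card (P - {u}) = DIM('a)" using c u fP by simp
    have "(\<lambda>x. - u + x) = (\<lambda>w. w - u)" by auto
    then have i1: "independent ((\<lambda>w. w - u) ` (P - {u}))"
      using ai affine_dependent_iff_dependent2[OF u] by simp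
    have c2: "\<forall>x\<in>P. cc u (P - {u}) x"
    proof
      fix x assume x: "x \<in> P"
      show "cc u (P - {u}) x"
      proof (cases "x = u")
        case True
        then show ?thesis unfolding cc_def by (intro exI[of _ "\<lambda>w. 0"]) simp
      next
        case False
        then have xN: "x \<in> P - {u}" using x by simp
        have "(\<Sum>w\<in>P - {u}. (if w = x then 1 else 0) *\<^sub>R (w - u)) = (if x = x then 1 else (0::real)) *\<^sub>R (x - u)"
          by (rule sum_single) (use fP xN in auto)
        then show ?thesis unfolding cc_def by (intro exI[of _ "\<lambda>w. if w = x then 1 else 0"]) simp
      qed
    qed
    show "P - {u} \<subseteq> P - {u} \<and> card (P - {u}) = DIM('a) \<and> independent ((\<lambda>w. w - u) ` (P - {u})) \<and>
        (\<forall>x\<in>P. cc u (P - {u}) x)" using c1 i1 c2 by simp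
  qed
  then show ?thesis unfolding good_def using fP s by blast
qed

lemma hs1: "X \<in> hanoi_states r 1 \<longleftrightarrow> (\<exists>c. c \<le> r \<and> X = [c])"
  unfolding hs_mem by (auto simp: length_Suc_conv)

lemma hs1': "X \<in> hanoi_states r (Suc 0) \<longleftrightarrow> (\<exists>c. c \<le> r \<and> X = [c])"
  using hs1 by simp

lemma iso_base:
  fixes V :: "'a set"
  assumes fV: "finite V" and cV: "card V = Suc r" and E: "\<And>u v. E u v \<longleftrightarrow> u \<in> V \<and> v \<in> V \<and> u \<noteq> v"
  shows "graph_iso V E (hanoi_states r 1) (hanoi_adj r)"
proof -
  obtain h where h: "bij_betw h V {0..<card V}" using ex_bij_betw_finite_nat[OF fV] by blast
  have h': "bij_betw h V {..r}" using h cV by (simp add: atLeast0LessThan lessThan_Suc_atMost)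
  have b2: "bij_betw (\<lambda>c. [c]) {..r} (hanoi_states r 1)"
    by (rule bij_betwI') (auto simp: hs1 hs1')
  have bf: "bij_betw (\<lambda>x. [h x]) V (hanoi_states r 1)"
    using bij_betw_trans[OF h' b2] by (simp add: comp_def)
  have adj1: "hanoi_adj r [a] [b] \<longleftrightarrow> a \<noteq> b" if "a \<le> r" "b \<le> r" for a b
  proof -
    have "[a] \<in> hanoi_states r 1" "[b] \<in> hanoi_states r 1" using that by (auto simp: hs1 hs1')
    from adj_char[OF this] show ?thesis by simp
  qed
  show ?thesis unfolding graph_iso_def
  proof (intro exI conjI ballI)
    show "bij_betw (\<lambda>x. [h x]) V (hanoi_states r 1)" by (rule bf)
    fix u v assume u: "u \<in> V" and v: "v \<in> V"
    have "h u \<le> r" "h v \<le> r" using h' u v bij_betwE by blast+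
    then have "hanoi_adj r [h u] [h v] \<longleftrightarrow> h u \<noteq> h v" by (rule adj1)
    also have "\<dots> \<longleftrightarrow> u \<noteq> v" using h' u v by (metis bij_betw_imp_inj_on inj_on_eq_iff)
    finally show "E u v \<longleftrightarrow> hanoi_adj r [h u] [h v]" using E u v by simp
  qed
qed

theorem proposition7:
  fixes P :: "nat \<Rightarrow> (real ^ 'n) set" and d :: "nat \<Rightarrow> real" and k :: nat
  assumes "k \<ge> 1"
    and "P 0 \<subseteq> sphere 0 1"
    and "card (P 0) = CARD('n) + 1"
    and "\<not> affine_dependent (P 0)"
    and "\<forall>i. i + 1 < k \<longrightarrow> trunc (P i) (d i) (P (Suc i))"
  shows "graph_iso {x. skel_vertex (P (k - 1)) x} (skel_edge (P (k - 1)))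
                   (hanoi_states CARD('n) k) (hanoi_adj CARD('n))"
proof -
  have DIMn: "DIM(real ^ 'n) = CARD('n)" by simp
  have main: "j < k \<Longrightarrow> (\<exists>N. good (P j) N) \<and>
      graph_iso {x. skel_vertex (P j) x} (skel_edge (P j)) (hanoi_states CARD('n) (Suc j)) (hanoi_adj CARD('n))"
    for j
  proof (induction j)
    case 0
    have g0: "good (P 0) (\<lambda>u. P 0 - {u})" using good_base[of "P 0"] assms(2-4) DIMn by simp
    have "graph_iso (P 0) (skel_edge (P 0)) (hanoi_states CARD('n) 1) (hanoi_adj CARD('n))"
    proof (rule iso_base)
      show "finite (P 0)" using g0 unfolding good_def by blast
      show "card (P 0) = Suc CARD('n)" using assms(3) by simp
      show "skel_edge (P 0) u v \<longleftrightarrow> u \<in> P 0 \<and> v \<in> P 0 \<and> u \<noteq> v" for u v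
        using edges[OF g0] by blast
    qed
    then show ?case using g0 vertices_good[OF g0] by auto
  next
    case (Suc j)
    then obtain N where gj: "good (P j) N" and isoj:
      "graph_iso {x. skel_vertex (P j) x} (skel_edge (P j)) (hanoi_states CARD('n) (Suc j)) (hanoi_adj CARD('n))"
      by auto
    have tr: "trunc (P j) (d j) (P (Suc j))" using assms(5) Suc.prems by simp
    interpret T: trs "P j" N "d j" "P (Suc j)" by unfold_locales (rule gj, rule tr)
    have gQ: "good (P (Suc j)) T.N'" by (rule T.good_Q)
    obtain f where f: "bij_betw f (P j) (hanoi_states CARD('n) (Suc j))"
      and fE: "\<forall>u\<in>P j. \<forall>v\<in>P j. skel_edge (P j) u v \<longleftrightarrow> hanoi_adj CARD('n) (f u) (f v)"
      using isoj unfolding graph_iso_def vertices_good[OF gj] by blast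
    have "graph_iso (P (Suc j)) (skel_edge (P (Suc j))) (hanoi_states CARD('n) (Suc (Suc j))) (hanoi_adj CARD('n))"
    proof (rule iso_step[where q = T.q])
      show "Suc j \<ge> 1" by simp
      show "bij_betw f (P j) (hanoi_states CARD('n) (Suc j))" by (rule f)
      show "\<forall>u\<in>P j. \<forall>v\<in>P j. skel_edge (P j) u v \<longleftrightarrow> hanoi_adj CARD('n) (f u) (f v)" by (rule fE)
      show "\<forall>u v. skel_edge (P j) u v \<longrightarrow> u \<in> P j \<and> v \<in> P j"
        using edges[OF gj] T.E_props(1) by blast
      show "P (Suc j) = {T.q u v |u v. skel_edge (P j) u v}"
        unfolding T.Q_eq edges[OF gj] ..
      show "\<forall>u v u' v'. skel_edge (P j) u v \<longrightarrow> skel_edge (P j) u' v' \<longrightarrow> T.q u v = T.q u' v' \<longrightarrow> u = u' \<and> v = v'"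
        using edges[OF gj] T.q_inj by blast
      show "\<forall>u v u' v'. skel_edge (P j) u v \<longrightarrow> skel_edge (P j) u' v' \<longrightarrow>
          (skel_edge (P (Suc j)) (T.q u v) (T.q u' v') \<longleftrightarrow> (u = u' \<and> v \<noteq> v') \<or> (u' = v \<and> v' = u))"
        using edges[OF gj] T.edges_Q by blast
    qed
    then show ?case using gQ vertices_good[OF gQ] by auto
  qed
  have "k - 1 < k" using assms(1) by simp
  from main[OF this] have "graph_iso {x. skel_vertex (P (k - 1)) x} (skel_edge (P (k - 1)))
      (hanoi_states CARD('n) (Suc (k - 1))) (hanoi_adj CARD('n))" by blast
  then show ?thesis using assms(1) by simp
qed


end
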